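(* Let the sequences be generated by Algorithm iMBA and suppose Assumptions 2, 3 and 4 hold. Then there exist $\widehat k\in\mathbb{N}$ and $\beta_{\overline\lambda}>0$ such that for each $k\ge\widehat k$ there is a vector $\overline\lambda^k\in\mathcal M(u^k,\overline x^k)$ with $\|\overline\lambda^k\|\le\beta_{\overline\lambda}$.
   Context: Problem (P): $\min_{x\in\mathbb{R}^n}F(x):=g_0(x)+\delta_{\mathbb{R}^m_-}(g(x))+\phi(x)$, where $g=(g_1,\dots,g_m)^\top$ and $\delta_{\mathbb{R}^m_-}$ is the indicator of the nonpositive orthant. Assumption 1 (standing): (i) $g_0:\mathbb{R}^n\to(-\infty,\infty]$ is locally Lipschitz and upper-$\mathcal C^2$ at every point of an open convex set $\mathcal O\supset\Gamma:=\{x:g(x)\in\mathbb{R}^m_-\}\neq\emptyset$, and each $g_i:\mathbb{R}^n\to\mathbb{R}$, $i\in[m]$, is locally Lipschitz and upper-$\mathcal C^2$ at every point of $\mathbb{R}^n$; (ii) $\phi:\mathbb{R}^n\to\mathbb{R}$ is convex and $F$ is bounded below on $\Gamma$. $\partial$ denotes the limiting subdifferential; $\partial g(x):=\{V\in\mathbb{R}^{n\times m}: V_i\in\partial g_i(x)\ \forall i\}$. Define $G(x,s,V,L):=g(s)+V^\top(x-s)+\tfrac12\|x-s\|^2L$. Algorithm iMBA (parameters $0<\mu_{\min}\le\mu_{\max}$, $0<L_{\min}\le L_{\max}$, $M,\beta_C,\beta_S,\alpha>0$, $\tau>1$, $x^0\in\Gamma$): at iteration $k$ choose $\xi^k\in\partial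 g_0(x^k)$, $V^k\in\partial g(x^k)$, $\mu_{k,0}\in[\mu_{\min},\mu_{\max}]$, $L^{k,0}\in[L_{\min},L_{\max}]^m$; for $j=0,1,\dots$ choose self-adjoint $\mathcal Q_{k,j}$ with $\mu_{k,j}\mathcal I\preceq\mathcal Q_{k,j}\preceq(\mu_{k,j}+M)\mathcal I$, let $F_{k,j}(x):=g_0(x^k)+\langle\xi^k,x-x^k\rangle+\frac12\langle x-x^k,\mathcal Q_{k,j}(x-x^k)\rangle+\phi(x)$, $\Gamma_{k,j}:=\{x:G(x,x^k,V^k,L^{k,j})\in\mathbb{R}^m_-\}$, $\overline x^{k,j}$ the unique minimizer of $F_{k,j}$ on $\Gamma_{k,j}$, and compute $y^{k,j}$, $v^{k,j}\in\partial\phi(y^{k,j})$, $\lambda^{k,j}\in\mathbb{R}^m_+$ with $F_{k,j}(y^{k,j})\le F_{k,j}(x^k)$, $(-\langle\lambda^{k,j},G(y^{k,j},x^k,V^k,L^{k,j})\rangle)_++\|[G(y^{k,j},x^k,V^k,L^{k,j})]_+\|_\infty\le\frac{\beta_C}2\|y^{k,j}-x^k\|^2$ and $\|\xi^k+\mathcal Q_{k,j}(y^{k,j}-x^k)+v^{k,j}+V^k\lambda^{k,j}+\langle L^{k,j},\lambda^{k,j}\rangle(y^{k,j}-x^k)\|\le\beta_S\|y^{k,j}-x^k\|$. If $g(y^{k,j})\in\mathbb{R}^m_-$ and $F(y^{k,j})\le F(x^k)-\frac\alpha2\|y^{k,j}-x^k\|^2$, accept ($j_k:=j$); else if $g(y^{k,j})\notin\mathbb{R}^m_-$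 set $L^{k,j+1}=\tau L^{k,j}$, $\mu_{k,j+1}=\mu_{k,j}$; else $L^{k,j+1}=L^{k,j}$, $\mu_{k,j+1}=\tau\mu_{k,j}$. Then $x^{k+1}:=y^{k,j_k}$, $(\mu_k,\mathcal Q_k,L^k,v^{k+1},\lambda^{k+1}):=(\mu_{k,j_k},\mathcal Q_{k,j_k},L^{k,j_k},v^{k,j_k},\lambda^{k,j_k})$, $\overline x^k:=\overline x^{k,j_k}$. Assumption 2: for each $k,j$, the multifunction $x\mapsto G(x,x^k,V^k,L^{k,j})-\mathbb{R}^m_-$ is metrically subregular at $(\overline x^{k,j},0)$. Assumption 3: $\{x^k\}$ is bounded; $\omega(x^0)$ denotes its set of cluster points. Parametric data: $\mathbb U:=\mathbb{R}^n\times\mathbb{R}^m_+\times\mathbb{R}^{n\times m}\times\mathbb{R}^n\times\mathbb S_+$ ($\mathbb S_+$ = positive semidefinite self-adjoint linear maps on $\mathbb{R}^n$); for $u=(s,L,V,\xi,\mathcal Q)$: $\theta(u,x):=g_0(s)+\langle\xi,x-s\rangle+\frac12\langle x-s,\mathcal Q(x-s)\rangle$, $H(u,x):=G(x,s,V,L)$, so $\nabla_xH(u,x)\lambda=V\lambda+\langle L,\lambda\rangle(x-s)$; $\mathcal S(u):=\{x:H(u,x)\in\mathbb{R}^m_-\}$; $\Lambda(u,x,y):=\{\lambda\in\mathcal N_{\mathbb{R}^m_-}(H(u,x)):\nabla_xH(u,x)\lambda=y\}$; $\mathcal M(u,x):=\{\lambda\in\mathcal N_{\mathbb{R}^m_-}(H(u,x)):0\in\nabla_x\theta(u,x)+\partial\phi(x)+\nabla_xH(u,x)\lambda\}$.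 The constraint system satisfies the partial bounded multiplier property (BMP) w.r.t. $x$ at $(u^*,x^* )$ with $x^*\in\mathcal S(u^* )$ if there exist $\kappa>0$ and a neighborhood $\mathcal U\times\mathcal V$ of $(u^*,x^* )$ such that for all $u\in\mathcal U$, $x\in\mathcal V\cap\mathcal S(u)$ and $y\in\mathcal N_{\mathcal S(u)}(x)$, $\Lambda(u,x,y)\cap\{\lambda:\|\lambda\|\le\kappa\|y\|\}\neq\emptyset$. Let $u^k:=(x^k,L^k,V^k,\xi^k,\mathcal Q_k)$. Assumption 4: the partial BMP w.r.t. $x$ holds at every cluster point of $\{(u^k,\overline x^k)\}_{k\in\mathbb{N}}$. *)

theory Defs
  imports "HOL-Analysis.Analysis"
begin

definition regular_subdiff :: "('a::real_inner \<Rightarrow> real) \<Rightarrow> 'a \<Rightarrow> 'a set" where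
  "regular_subdiff f x = {v. \<forall>e>0. \<exists>d>0. \<forall>z. dist z x < d \<longrightarrow>
       f x + inner v (z - x) - e * norm (z - x) \<le> f z}"

definition limiting_subdiff :: "('a::real_inner \<Rightarrow> real) \<Rightarrow> 'a \<Rightarrow> 'a set" where
  "limiting_subdiff f x = {v. \<exists>xs vs. xs \<longlonglongrightarrow> x \<and> (\<lambda>k. f (xs k)) \<longlonglongrightarrow> f x \<and>
       (\<forall>k. vs k \<in> regular_subdiff f (xs k)) \<and> vs \<longlonglongrightarrow> v}"

definition regular_normal_cone :: "'a::real_inner set \<Rightarrow> 'a \<Rightarrow> 'a set" where
  "regular_normal_cone C x = (if x \<in> C then {v. \<forall>e>0. \<exists>d>0. \<forall>z\<in>C. dist z x < d \<longrightarrow>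
       inner v (z - x) \<le> e * norm (z - x)} else {})"

definition limiting_normal_cone :: "'a::real_inner set \<Rightarrow> 'a \<Rightarrow> 'a set" where
  "limiting_normal_cone C x = (if x \<in> C then {v. \<exists>xs vs. (\<forall>k. xs k \<in> C) \<and> xs \<longlonglongrightarrow> x \<and>
       (\<forall>k. vs k \<in> regular_normal_cone C (xs k)) \<and> vs \<longlonglongrightarrow> v} else {})"

definition metrically_subregular :: "('a::metric_space \<Rightarrow> 'b::metric_space set) \<Rightarrow> 'a \<Rightarrow> 'b \<Rightarrow> bool" where
  "metrically_subregular Phi xb yb \<longleftrightarrow> yb \<in> Phi xb \<and>
     (\<exists>\<kappa>>0. \<exists>\<epsilon>>0. \<forall>x\<in>ball xb \<epsilon>. infdist x {z. yb \<in> Phi z} \<le> \<kappa> * infdist yb (Phi x))"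

definition loc_lipschitz_on :: "'a::metric_space set \<Rightarrow> ('a \<Rightarrow> 'b::metric_space) \<Rightarrow> bool" where
  "loc_lipschitz_on S f \<longleftrightarrow> (\<forall>x\<in>S. \<exists>e>0. \<exists>K. K-lipschitz_on (ball x e) f)"

text \<open>Upper-C2 at a point: locally a pointwise minimum over a compact index set T of
  C2 functions whose values, gradients and Hessians depend jointly continuously on (x,t).
  (The index set is taken as a compact subset of R^n x R^n, which suffices.)\<close>
definition upper_C2_at :: "(real^'n \<Rightarrow> real) \<Rightarrow> real^'n \<Rightarrow> bool" where
  "upper_C2_at f x0 \<longleftrightarrow>
    (\<exists>W (T :: ((real^'n) \<times> (real^'n)) set) h dh d2h.
       open W \<and> x0 \<in> W \<and> compact T \<and> T \<noteq> {} \<and>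
       (\<forall>x\<in>W. (\<exists>t\<in>T. f x = h x t) \<and> (\<forall>t\<in>T. f x \<le> h x t)) \<and>
       (\<forall>x\<in>W. \<forall>t\<in>T. ((\<lambda>y. h y t) has_derivative (\<lambda>d. inner (dh x t) d)) (at x) \<and>
                       ((\<lambda>y. dh y t) has_derivative (\<lambda>d. d2h x t *v d)) (at x)) \<and>
       continuous_on (W \<times> T) (\<lambda>p. h (fst p) (snd p)) \<and>
       continuous_on (W \<times> T) (\<lambda>p. dh (fst p) (snd p)) \<and>
       continuous_on (W \<times> T) (\<lambda>p. (d2h (fst p) (snd p) :: real^'n^'n)))"

definition cluster_points :: "(nat \<Rightarrow> 'a::topological_space) \<Rightarrow> 'a set" where
  "cluster_points w = {p. \<exists>r. strict_mono r \<and> (w \<circ> r) \<longlonglongrightarrow> p}"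

definition nonpos_orthant :: "(real^'m) set" where
  "nonpos_orthant = {z. \<forall>i. z $ i \<le> 0}"

definition Gamma_set :: "(real^'n \<Rightarrow> real^'m) \<Rightarrow> (real^'n) set" where
  "Gamma_set g = {x. g x \<in> nonpos_orthant}"

definition Gfun :: "(real^'n \<Rightarrow> real^'m) \<Rightarrow> real^'n \<Rightarrow> real^'n \<Rightarrow> real^'m^'n \<Rightarrow> real^'m \<Rightarrow> real^'m" where
  "Gfun g x s V L = g s + transpose V *v (x - s) + (norm (x - s)^2 / 2) *\<^sub>R L"

definition Fmodel :: "(real^'n \<Rightarrow> real) \<Rightarrow> (real^'n \<Rightarrow> real) \<Rightarrow> real^'n \<Rightarrow> real^'n \<Rightarrow> real^'n^'n \<Rightarrow> real^'n \<Rightarrow> real" where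
  "Fmodel g0 \<phi> xk xi Q z = g0 xk + inner xi (z - xk) + inner (z - xk) (Q *v (z - xk)) / 2 + \<phi> z"

definition Uset :: "((real^'n) \<times> (real^'m) \<times> (real^'m^'n) \<times> (real^'n) \<times> (real^'n^'n)) set" where
  "Uset = {(s, L, V, xi, Q). (\<forall>i. 0 \<le> L $ i) \<and> transpose Q = Q \<and> (\<forall>d. 0 \<le> inner d (Q *v d))}"

definition Sset :: "(real^'n \<Rightarrow> real^'m) \<Rightarrow> (real^'n) \<times> (real^'m) \<times> (real^'m^'n) \<times> (real^'n) \<times> (real^'n^'n) \<Rightarrow> (real^'n) set" where
  "Sset g u = (case u of (s, L, V, xi, Q) \<Rightarrow> {x. Gfun g x s V L \<in> nonpos_orthant})"

definition Lambda_set :: "(real^'n \<Rightarrow> real^'m) \<Rightarrow> (real^'n) \<times> (real^'m) \<times> (real^'m^'n) \<times> (real^'n) \<times> (real^'n^'n)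
     \<Rightarrow> real^'n \<Rightarrow> real^'n \<Rightarrow> (real^'m) set" where
  "Lambda_set g u x y = (case u of (s, L, V, xi, Q) \<Rightarrow>
     {lam. lam \<in> limiting_normal_cone nonpos_orthant (Gfun g x s V L) \<and>
           V *v lam + (inner L lam) *\<^sub>R (x - s) = y})"

text \<open>M(u,x): KKT multipliers; grad_x theta(u,x) = xi + Q (x - s) since Q is self-adjoint.\<close>
definition Mset :: "(real^'n \<Rightarrow> real^'m) \<Rightarrow> (real^'n \<Rightarrow> real) \<Rightarrow> (real^'n) \<times> (real^'m) \<times> (real^'m^'n) \<times> (real^'n) \<times> (real^'n^'n)
     \<Rightarrow> real^'n \<Rightarrow> (real^'m) set" where
  "Mset g \<phi> u x = (case u of (s, L, V, xi, Q) \<Rightarrow>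
     {lam. lam \<in> limiting_normal_cone nonpos_orthant (Gfun g x s V L) \<and>
           (\<exists>w\<in>limiting_subdiff \<phi> x. xi + Q *v (x - s) + w + V *v lam + (inner L lam) *\<^sub>R (x - s) = 0)})"

definition partial_BMP :: "(real^'n \<Rightarrow> real^'m) \<Rightarrow> (real^'n) \<times> (real^'m) \<times> (real^'m^'n) \<times> (real^'n) \<times> (real^'n^'n)
     \<Rightarrow> real^'n \<Rightarrow> bool" where
  "partial_BMP g us xs \<longleftrightarrow> xs \<in> Sset g us \<and>
     (\<exists>\<kappa>>0. \<exists>\<delta>>0. \<forall>u x. u \<in> Uset \<and> dist (u, x) (us, xs) < \<delta> \<and> x \<in> Sset g u \<longrightarrow>
        (\<forall>y\<in>limiting_normal_cone (Sset g u) x. \<exists>lam\<in>Lambda_set g u x y. norm lam \<le> \<kappa> * norm y))"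

end

theory Submission
  imports Defs
begin


lemma quad_taylor:
  fixes hh :: "real^'n \<Rightarrow> real" and dd :: "real^'n \<Rightarrow> real^'n" and HH :: "real^'n \<Rightarrow> real^'n^'n"
  assumes S: "convex S" "x \<in> S" "y \<in> S"
   and dh: "\<And>z. z\<in>S \<Longrightarrow> (hh has_derivative (\<lambda>d. inner (dd z) d)) (at z)"
   and d2h: "\<And>z. z\<in>S \<Longrightarrow> (dd has_derivative (\<lambda>d. HH z *v d)) (at z)"
   and C: "\<And>z. z\<in>S \<Longrightarrow> norm (HH z) \<le> C"
  shows "hh y \<le> hh x + inner (dd x) (y - x) + real CARD('n) * real CARD('n) * C * norm (y-x)^2"
proof -
  define Cn where "Cn = real CARD('n) * real CARD('n) * C"
  have lip: "norm (dd z - dd w) \<le> Cn * norm (z - w)" if "z \<in> S" "w \<in> S" for z w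
  proof (rule differentiable_bound[OF S(1) _ _ that])
    fix u assume "u \<in> S"
    show "(dd has_derivative (*v) (HH u)) (at u within S)"
      using d2h[OF \<open>u \<in> S\<close>] has_derivative_at_withinI by blast
    have "\<bar>HH u $ i $ j\<bar> \<le> C" for i j
      using component_le_norm_cart[of "HH u $ i" j] Finite_Cartesian_Product.norm_nth_le[of "HH u" i] C[OF \<open>u \<in> S\<close>]
      by linarith
    then show "onorm ((*v) (HH u)) \<le> Cn" unfolding Cn_def by (rule onorm_le_matrix_component)
  qed
  define e where "e z = hh z - inner (dd x) z" for z
  have seg: "closed_segment x y \<subseteq> S" using S closed_segment_subset by blast
  have "norm (e y - e x) \<le> (Cn * norm (y - x)) * norm (y - x)"
  proof (rule differentiable_bound[of "closed_segment x y" e "\<lambda>z d. inner (dd z - dd x) d"])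
    show "convex (closed_segment x y)" by simp
    show "y \<in> closed_segment x y" "x \<in> closed_segment x y" by auto
    fix z assume z: "z \<in> closed_segment x y"
    have "((\<lambda>z. hh z - inner (dd x) z) has_derivative (\<lambda>d. inner (dd z) d - inner (dd x) d)) (at z)"
      using dh[of z] seg z by (auto intro!: derivative_eq_intros)
    then show "(e has_derivative (\<lambda>d. inner (dd z - dd x) d)) (at z within closed_segment x y)"
      unfolding e_def by (simp add: inner_diff_left has_derivative_at_withinI)
    have "norm (dd z - dd x) \<le> Cn * norm (z - x)" using lip[of z x] seg z S by auto
    also have "\<dots> \<le> Cn * norm (y - x)"
    proof -
      have "Cn \<ge> 0" 
      proof -
        have "0 \<le> norm (HH x)" by simp
        then have "C \<ge> 0" using C[OF S(2)] by linarith
        then show ?thesis unfolding Cn_def by simp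
      qed
      moreover have "norm (z - x) \<le> norm (y - x)"
        using z by (metis dist_commute dist_in_closed_segment dist_norm)
      ultimately show ?thesis by (simp add: mult_left_mono)
    qed
    finally have nb: "norm (dd z - dd x) \<le> Cn * norm (y - x)" .
    show "onorm (\<lambda>d. inner (dd z - dd x) d) \<le> Cn * norm (y - x)"
    proof (rule onorm_le)
      fix d
      have "norm (inner (dd z - dd x) d) \<le> norm (dd z - dd x) * norm d"
        by (simp add: Cauchy_Schwarz_ineq2)
      also have "\<dots> \<le> Cn * norm (y - x) * norm d" by (rule mult_right_mono[OF nb]) simp
      finally show "norm (inner (dd z - dd x) d) \<le> Cn * norm (y - x) * norm d" .
    qed
  qed
  then have "e y - e x \<le> Cn * norm (y - x)^2" by (simp add: power2_eq_square mult.assoc)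
  then show ?thesis unfolding e_def Cn_def by (simp add: inner_diff_right)
qed



lemma uc2_local:
  fixes f :: "real^'n \<Rightarrow> real"
  assumes "upper_C2_at f x0"
  shows "\<exists>r>0. \<exists>\<rho> D. \<forall>x\<in>ball x0 r. \<forall>v\<in>limiting_subdiff f x. norm v \<le> D \<and>
            (\<forall>y\<in>ball x0 r. f y \<le> f x + inner v (y - x) + \<rho> * norm (y - x)^2)"
proof -
  obtain W and T :: "((real^'n) \<times> (real^'n)) set" and h dh d2h where
    W: "open W" "x0 \<in> W" "compact T" "T \<noteq> {}"
    and rep: "\<forall>x\<in>W. (\<exists>t\<in>T. f x = h x t) \<and> (\<forall>t\<in>T. f x \<le> h x t)"
    and der: "\<forall>x\<in>W. \<forall>t\<in>T. ((\<lambda>y. h y t) has_derivative (\<lambda>d. inner (dh x t) d)) (at x) \<and>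
                       ((\<lambda>y. dh y t) has_derivative (\<lambda>d. d2h x t *v d)) (at x)"
    and c2: "continuous_on (W \<times> T) (\<lambda>p. dh (fst p) (snd p))"
    and c3: "continuous_on (W \<times> T) (\<lambda>p. (d2h (fst p) (snd p) :: real^'n^'n))"
    using assms unfolding upper_C2_at_def by blast
  obtain r0 where r0: "r0 > 0" "cball x0 r0 \<subseteq> W" using W open_contains_cball by blast
  define B where "B = cball x0 r0"
  have cBT: "compact (B \<times> T)" unfolding B_def using W(3) by (simp add: compact_Times)
  have BT: "B \<times> T \<subseteq> W \<times> T" using r0 B_def by auto
  have "bounded ((\<lambda>p. dh (fst p) (snd p)) ` (B \<times> T))"
    by (rule compact_imp_bounded, rule compact_continuous_image[OF continuous_on_subset[OF c2 BT] cBT])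
  then obtain D where D: "\<And>p. p \<in> B \<times> T \<Longrightarrow> norm (dh (fst p) (snd p)) \<le> D"
    unfolding bounded_iff by blast
  have "bounded ((\<lambda>p. d2h (fst p) (snd p)) ` (B \<times> T))"
    by (rule compact_imp_bounded, rule compact_continuous_image[OF continuous_on_subset[OF c3 BT] cBT])
  then obtain C where C: "\<And>p. p \<in> B \<times> T \<Longrightarrow> norm (d2h (fst p) (snd p)) \<le> C"
    unfolding bounded_iff by blast
  define \<rho> where "\<rho> = real CARD('n) * real CARD('n) * C"
  have quad: "h y t \<le> h x t + inner (dh x t) (y - x) + \<rho> * norm (y - x)^2"
    if "t \<in> T" "x \<in> B" "y \<in> B" for t x y
    unfolding \<rho>_def
  proof (rule quad_taylor[where S=B and HH="\<lambda>z. d2h z t"])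
    show "convex B" "x \<in> B" "y \<in> B" using that B_def by auto
    fix z assume z: "z \<in> B"
    then have zW: "z \<in> W" using r0 B_def by auto
    show "((\<lambda>y. h y t) has_derivative (\<lambda>d. inner (dh z t) d)) (at z)" using der zW that by blast
    show "((\<lambda>y. dh y t) has_derivative (\<lambda>d. d2h z t *v d)) (at z)" using der zW that by blast
    show "norm (d2h z t) \<le> C" using C[of "(z,t)"] z that by auto
  qed
  have regchar: "\<exists>t\<in>T. f z = h z t \<and> v = dh z t"
    if z: "z \<in> ball x0 r0" and v: "v \<in> regular_subdiff f z" for z v
  proof -
    have zB: "z \<in> B" using z B_def by auto
    then obtain t where t: "t \<in> T" "f z = h z t" using rep r0 B_def by blast
    define a where "a = v - dh z t"
    have "a = 0"
    proof (rule ccontr)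
      assume a0: "a \<noteq> 0"
      then have na: "norm a > 0" by simp
      obtain d where d: "d > 0" "\<forall>z'. dist z' z < d \<longrightarrow> f z + inner v (z' - z) - (norm a / 2) * norm (z' - z) \<le> f z'"
      proof -
        have "norm a / 2 > 0" using na by simp
        then show ?thesis using v that unfolding regular_subdiff_def by blast
      qed
      define s where "s = min (d / (2 * norm a)) (min ((r0 - dist x0 z) / (2 * norm a)) (1 / (4 * (\<bar>\<rho>\<bar> + 1))))"
      have rz: "r0 - dist x0 z > 0" using z by simp
      have p1: "d / (2 * norm a) > 0" using d na by simp
      have p2: "(r0 - dist x0 z) / (2 * norm a) > 0" using rz na by simp
      have p3: "1 / (4 * (\<bar>\<rho>\<bar> + 1)) > 0" by (simp add: abs_add_one_gt_zero)
      have s0: "s > 0" unfolding s_def using p1 p2 p3 by simp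
      define z' where "z' = z + s *\<^sub>R a"
      have nz: "norm (z' - z) = s * norm a" unfolding z'_def using s0 by simp
      have "s * (2 * norm a) \<le> d / (2 * norm a) * (2 * norm a)"
        by (rule mult_right_mono) (use na in \<open>auto simp: s_def\<close>)
      also have "\<dots> = d" using na by simp
      finally have "s * norm a < d" using d by linarith
      then have dz: "dist z' z < d" using nz by (simp add: dist_norm)
      have "s * (2 * norm a) \<le> (r0 - dist x0 z) / (2 * norm a) * (2 * norm a)"
        by (rule mult_right_mono) (use na in \<open>auto simp: s_def\<close>)
      also have "\<dots> = r0 - dist x0 z" using na by simp
      finally have "s * norm a < r0 - dist x0 z" using rz by linarith
      moreover have "dist x0 z' \<le> dist x0 z + dist z z'" by (rule dist_triangle)
      moreover have "dist z z' = s * norm a" using nz by (simp add: dist_norm norm_minus_commute)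
      ultimately have "dist x0 z' \<le> r0" by linarith
      then have z'B: "z' \<in> B" unfolding B_def by simp
      have "s * (4 * (\<bar>\<rho>\<bar> + 1)) \<le> 1 / (4 * (\<bar>\<rho>\<bar> + 1)) * (4 * (\<bar>\<rho>\<bar> + 1))"
        by (rule mult_right_mono) (auto simp: s_def)
      also have "\<dots> = 1" by (simp add: abs_add_one_gt_zero)
      finally have s4: "s * (\<bar>\<rho>\<bar> + 1) \<le> 1/4" by linarith
      have low: "f z + inner v (z' - z) - (norm a / 2) * norm (z' - z) \<le> f z'" using d dz by blast
      have up: "f z' \<le> f z + inner (dh z t) (z' - z) + \<rho> * norm (z' - z)^2"
      proof -
        have "z' \<in> W" using z'B B_def r0 by auto
        then have "f z' \<le> h z' t" using rep t(1) by blast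
        also have "\<dots> \<le> h z t + inner (dh z t) (z' - z) + \<rho> * norm (z' - z)^2" by (rule quad[OF t(1) zB z'B])
        finally show ?thesis using t by simp
      qed
      have "inner a (z' - z) = inner v (z' - z) - inner (dh z t) (z' - z)"
        unfolding a_def by (simp add: inner_diff_left)
      then have "inner a (z' - z) \<le> (norm a / 2) * norm (z' - z) + \<rho> * norm (z' - z)^2"
        using low up by linarith
      then have "s * (norm a)^2 \<le> (norm a / 2) * (s * norm a) + \<rho> * (s * norm a)^2"
      proof -
        have "inner a (z' - z) = s * (norm a)^2" unfolding z'_def by (simp add: power2_norm_eq_inner)
        then show ?thesis using \<open>inner a (z' - z) \<le> _\<close> unfolding nz by simp
      qed
      then have "s * (norm a)^2 \<le> s * (norm a)^2 / 2 + (s * \<rho>) * s * (norm a)^2"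
        by (simp add: power2_eq_square algebra_simps)
      moreover have "(s * \<rho>) * s * (norm a)^2 \<le> (1/4) * s * (norm a)^2"
      proof -
        have "s * \<rho> \<le> s * (\<bar>\<rho>\<bar> + 1)" using s0 by (intro mult_left_mono) auto
        then have "s * \<rho> \<le> 1/4" using s4 by linarith
        then show ?thesis using s0 by (intro mult_right_mono) auto
      qed
      ultimately have "s * (norm a)^2 \<le> 0" by linarith
      then show False using s0 na by (simp add: mult_le_0_iff)
    qed
    then show ?thesis using t unfolding a_def by auto
  qed
  show ?thesis
  proof (intro exI conjI ballI)
    show "r0 > 0" by (rule r0)
    fix x v assume x: "x \<in> ball x0 r0" and v: "v \<in> limiting_subdiff f x"
    then obtain xs vs where lim: "xs \<longlonglongrightarrow> x" "(\<lambda>k. f (xs k)) \<longlonglongrightarrow> f x"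
      "\<forall>k. vs k \<in> regular_subdiff f (xs k)" "vs \<longlonglongrightarrow> v"
      unfolding limiting_subdiff_def by blast
    have ev: "eventually (\<lambda>k. xs k \<in> ball x0 r0) sequentially"
      by (rule topological_tendstoD[OF lim(1) open_ball x])
    have evrep: "eventually (\<lambda>k. \<exists>t\<in>T. f (xs k) = h (xs k) t \<and> vs k = dh (xs k) t) sequentially"
      using ev
    proof (rule eventually_mono)
      fix k assume "xs k \<in> ball x0 r0"
      then show "\<exists>t\<in>T. f (xs k) = h (xs k) t \<and> vs k = dh (xs k) t" using regchar lim(3) by blast
    qed
    have "eventually (\<lambda>k. norm (vs k) \<le> D) sequentially"
      using evrep ev
    proof eventually_elim
      case (elim k)
      then obtain t where "t \<in> T" "vs k = dh (xs k) t" by blast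
      then show ?case using D[of "(xs k, t)"] elim(2) B_def by auto
    qed
    then show "norm v \<le> D"
      by (intro tendsto_upperbound[OF tendsto_norm[OF lim(4)]]) simp_all
    fix y assume y: "y \<in> ball x0 r0"
    then have yB: "y \<in> B" using B_def by auto
    have "eventually (\<lambda>k. f y \<le> f (xs k) + inner (vs k) (y - xs k) + \<rho> * norm (y - xs k)^2) sequentially"
      using evrep ev
    proof eventually_elim
      case (elim k)
      then obtain t where t: "t \<in> T" "f (xs k) = h (xs k) t" "vs k = dh (xs k) t" by blast
      have "f y \<le> h y t" using rep yB B_def r0 t by auto
      also have "\<dots> \<le> h (xs k) t + inner (dh (xs k) t) (y - xs k) + \<rho> * norm (y - xs k)^2"
        using quad t elim(2) yB B_def by auto
      finally show ?case using t by simp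
    qed
    moreover have L: "(\<lambda>k. f (xs k) + inner (vs k) (y - xs k) + \<rho> * norm (y - xs k)^2)
        \<longlonglongrightarrow> f x + inner v (y - x) + \<rho> * norm (y - x)^2"
      using lim by (intro tendsto_intros) auto
    ultimately show "f y \<le> f x + inner v (y - x) + \<rho> * norm (y - x)^2"
      by (intro tendsto_lowerbound[OF L]) simp_all
  qed
qed



lemma uc2_compact:
  fixes f :: "real^'n \<Rightarrow> real"
  assumes K: "compact K" and uc: "\<forall>z\<in>K. upper_C2_at f z"
  shows "\<exists>r>0. \<exists>\<rho> D. \<forall>x\<in>K. \<forall>v\<in>limiting_subdiff f x. norm v \<le> D \<and>
            (\<forall>y\<in>ball x r. f y \<le> f x + inner v (y - x) + \<rho> * norm (y - x)^2)"
proof -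
  have "\<forall>z\<in>K. \<exists>r>0. \<exists>\<rho> D. \<forall>x\<in>ball z r. \<forall>v\<in>limiting_subdiff f x. norm v \<le> D \<and>
            (\<forall>y\<in>ball z r. f y \<le> f x + inner v (y - x) + \<rho> * norm (y - x)^2)"
    using uc uc2_local by blast
  then obtain R P Dd where RPD: "\<And>z. z \<in> K \<Longrightarrow> R z > 0 \<and> (\<forall>x\<in>ball z (R z). \<forall>v\<in>limiting_subdiff f x. norm v \<le> Dd z \<and>
            (\<forall>y\<in>ball z (R z). f y \<le> f x + inner v (y - x) + P z * norm (y - x)^2))"
    by metis
  have cov: "K \<subseteq> (\<Union>z\<in>K. ball z (R z))" using RPD by force
  obtain F where F: "F \<subseteq> K" "finite F" "K \<subseteq> (\<Union>z\<in>F. ball z (R z))"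
    by (rule compactE_image[OF K _ cov]) auto
  obtain e where e: "e > 0" "\<And>x. x \<in> K \<Longrightarrow> \<exists>G\<in>(\<lambda>z. ball z (R z)) ` F. ball x e \<subseteq> G"
    by (rule Heine_Borel_lemma[OF K]) (use F in auto)
  define \<rho> where "\<rho> = (\<Sum>z\<in>F. \<bar>P z\<bar>)"
  define D where "D = (\<Sum>z\<in>F. \<bar>Dd z\<bar>)"
  show ?thesis
  proof (intro exI conjI ballI)
    show "e > 0" by (rule e)
    fix x v assume x: "x \<in> K" and v: "v \<in> limiting_subdiff f x"
    obtain z where z: "z \<in> F" "ball x e \<subseteq> ball z (R z)" using e(2)[OF x] by blast
    have zK: "z \<in> K" using z F by auto
    have "x \<in> ball x e" using e(1) by simp
    then have xz: "x \<in> ball z (R z)" using z(2) by blast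
    have Pz: "\<bar>P z\<bar> \<le> \<rho>" unfolding \<rho>_def by (rule member_le_sum) (use z F in auto)
    have Dz: "\<bar>Dd z\<bar> \<le> D" unfolding D_def by (rule member_le_sum) (use z F in auto)
    show "norm v \<le> D" using RPD[OF zK] xz v Dz by fastforce
    fix y assume y: "y \<in> ball x e"
    then have "y \<in> ball z (R z)" using z by auto
    then have "f y \<le> f x + inner v (y - x) + P z * norm (y - x)^2" using RPD[OF zK] xz v by blast
    also have "P z * norm (y - x)^2 \<le> \<rho> * norm (y - x)^2"
      using Pz by (intro mult_right_mono) auto
    finally show "f y \<le> f x + inner v (y - x) + \<rho> * norm (y - x)^2" by simp
  qed
qed



lemma uc2_global:
  fixes f :: "'a::real_inner \<Rightarrow> real"
  assumes r: "r > 0" and loc: "\<forall>y\<in>ball x r. f y \<le> f x + inner v (y - x) + \<rho> * norm (y - x)^2"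
   and v: "norm v \<le> D" and fx: "\<bar>f x\<bar> \<le> Fm" and fy: "\<bar>f y\<bar> \<le> Fm"
  shows "f y \<le> f x + inner v (y - x) + (\<bar>\<rho>\<bar> + 2 * Fm / r^2 + D / r) * norm (y - x)^2"
proof -
  have Fm0: "Fm \<ge> 0" using fx by linarith
  have D0: "D \<ge> 0" using v norm_ge_zero order_trans by blast
  have nn: "0 \<le> (2 * Fm / r^2) * norm (y - x)^2 + (D / r) * norm (y - x)^2"
    using Fm0 D0 r by simp
  show ?thesis
  proof (cases "norm (y - x) < r")
    case True
    then have "y \<in> ball x r" by (simp add: dist_norm norm_minus_commute)
    then have "f y \<le> f x + inner v (y - x) + \<rho> * norm (y - x)^2" using loc by blast
    also have "\<rho> * norm (y - x)^2 \<le> \<bar>\<rho>\<bar> * norm (y - x)^2" by (intro mult_right_mono) auto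
    finally show ?thesis using nn by (simp add: distrib_right)
  next
    case False
    then have ge: "norm (y - x) \<ge> r" by simp
    have "r^2 \<le> norm (y - x)^2" using ge r by (intro power_mono) auto
    then have "2 * Fm \<le> (2 * Fm / r^2) * norm (y - x)^2"
      using r Fm0 by (simp add: field_simps mult_left_mono)
    moreover have "D * norm (y - x) \<le> (D / r) * norm (y - x)^2"
    proof -
      have "D * norm (y - x) * r \<le> D * norm (y - x) * norm (y - x)"
        using ge D0 by (intro mult_left_mono) auto
      then show ?thesis using r by (simp add: field_simps power2_eq_square)
    qed
    moreover have "- inner v (y - x) \<le> D * norm (y - x)"
    proof -
      have "\<bar>inner v (y - x)\<bar> \<le> norm v * norm (y - x)" by (rule Cauchy_Schwarz_ineq2)
      also have "\<dots> \<le> D * norm (y - x)" using v by (intro mult_right_mono) auto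
      finally show ?thesis by linarith
    qed
    moreover have "0 \<le> \<bar>\<rho>\<bar> * norm (y - x)^2" by simp
    moreover have "(\<bar>\<rho>\<bar> + 2 * Fm / r^2 + D / r) * norm (y - x)^2 = \<bar>\<rho>\<bar> * norm (y - x)^2 + (2 * Fm / r^2) * norm (y - x)^2 + (D / r) * norm (y - x)^2"
      by (simp add: distrib_right)
    moreover have "f y \<le> Fm" "- f x \<le> Fm" using fx fy by linarith+
    ultimately show ?thesis by linarith
  qed
qed

lemma convex_lower_bound:
  fixes \<phi> :: "'a::real_normed_vector \<Rightarrow> real"
  assumes cv: "convex_on UNIV \<phi>" and M: "\<And>z. norm z \<le> R + 1 \<Longrightarrow> \<bar>\<phi> z\<bar> \<le> M"
    and x: "norm x \<le> R"
  shows "\<phi> x - \<phi> (x + d) \<le> 2 * M * norm d"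
proof (cases "d = 0")
  case True then show ?thesis by simp
next
  case False
  then have nd: "norm d > 0" by simp
  have d1: "1 + norm d > 0" "1 + norm d \<noteq> 0" using nd by linarith+
  define u where "u = d /\<^sub>R norm d"
  have nu: "norm u = 1" unfolding u_def using nd by simp
  define p where "p = x - u"
  have np: "norm p \<le> R + 1" unfolding p_def using x nu norm_triangle_ineq4[of x u] by linarith
  define th where "th = 1 / (1 + norm d)"
  have th: "0 \<le> th" "th \<le> 1" unfolding th_def using nd by (auto simp: divide_le_eq_1 add_pos_nonneg)
  have eq: "(1 - th) *\<^sub>R p + th *\<^sub>R (x + d) = x"
  proof -
    have "(1 - th) *\<^sub>R p + th *\<^sub>R (x + d) = x + (th * (1 + norm d) - 1) *\<^sub>R u"
      unfolding p_def u_def using nd by (simp add: algebra_simps)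
    also have "th * (1 + norm d) = 1" unfolding th_def using d1 by simp
    finally show ?thesis by simp
  qed
  have "\<phi> x \<le> (1 - th) * \<phi> p + th * \<phi> (x + d)"
    using convex_onD[OF cv th] eq by (metis UNIV_I)
  then have "(1 + norm d) * \<phi> x \<le> (1 + norm d) * ((1 - th) * \<phi> p + th * \<phi> (x + d))"
    using nd by (intro mult_left_mono) auto
  also have "\<dots> = (1 + norm d) * \<phi> p - ((1 + norm d) * th) * \<phi> p + ((1 + norm d) * th) * \<phi> (x + d)"
    by (simp add: algebra_simps)
  also have "(1 + norm d) * th = 1" unfolding th_def using d1 by simp
  also have "(1 + norm d) * \<phi> p - 1 * \<phi> p + 1 * \<phi> (x + d) = norm d * \<phi> p + \<phi> (x + d)"
    by (simp add: algebra_simps)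
  finally have "\<phi> x - \<phi> (x + d) \<le> norm d * (\<phi> p - \<phi> x)" by (simp add: algebra_simps)
  also have "\<dots> \<le> norm d * (2 * M)"
    using M[OF np] M[of x] x by (intro mult_left_mono) auto
  finally show ?thesis by (simp add: mult.commute)
qed

lemma subgrad_bound:
  fixes \<phi> :: "'a::real_inner \<Rightarrow> real"
  assumes sg: "\<And>z. \<phi> z \<ge> \<phi> x + inner w (z - x) - C * norm (z - x)^2"
    and M: "\<And>z. norm z \<le> R + 1 \<Longrightarrow> \<bar>\<phi> z\<bar> \<le> M" and x: "norm x \<le> R" and C: "C \<ge> 0"
  shows "norm w \<le> 2 * M + C"
proof (cases "w = 0")
  case True
  have "\<bar>\<phi> x\<bar> \<le> M" using M x by simp
  then show ?thesis using True C by simp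
next
  case False
  then have nw: "norm w > 0" by simp
  define z where "z = x + w /\<^sub>R norm w"
  have nzx: "norm (z - x) = 1" unfolding z_def using nw by simp
  have "norm z \<le> R + 1" unfolding z_def using x nw norm_triangle_ineq[of x "w /\<^sub>R norm w"] by simp
  then have "\<bar>\<phi> z\<bar> \<le> M" by (rule M)
  moreover have "\<bar>\<phi> x\<bar> \<le> M" using M x by simp
  moreover have "inner w (z - x) = norm w"
    unfolding z_def using nw by (simp add: power2_norm_eq_inner[symmetric] power2_eq_square)
  ultimately show ?thesis using sg[of z] nzx by simp
qed

lemma sym_inner:
  fixes Q :: "real^'n^'n"
  assumes "transpose Q = Q"
  shows "inner a (Q *v b) = inner b (Q *v a)"
proof -
  have "inner a (Q *v b) = inner (a v* Q) b" by (rule dot_lmul_matrix[symmetric])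
  also have "a v* Q = transpose Q *v a" by simp
  finally show ?thesis using assms by (simp add: inner_commute)
qed

lemma quad_convex_ineq:
  fixes Q :: "real^'n^'n"
  assumes sym: "transpose Q = Q" and psd: "\<forall>d. 0 \<le> inner d (Q *v d)"
    and that: "0 \<le> t" "t \<le> 1"
  shows "inner ((1 - t) *\<^sub>R a + t *\<^sub>R b) (Q *v ((1 - t) *\<^sub>R a + t *\<^sub>R b))
     \<le> (1 - t) * inner a (Q *v a) + t * inner b (Q *v b)"
proof -
  define c where "c = a - b"
  have e1: "(1 - t) *\<^sub>R a + t *\<^sub>R b = a - t *\<^sub>R c" unfolding c_def by (simp add: algebra_simps)
  have bb: "b = a - c" unfolding c_def by simp
  have s: "inner c (Q *v a) = inner a (Q *v c)" by (rule sym_inner[OF sym])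
  have l: "inner (a - t *\<^sub>R c) (Q *v (a - t *\<^sub>R c)) = inner a (Q *v a) - 2 * t * inner a (Q *v c) + t^2 * inner c (Q *v c)"
    using s by (simp add: matrix_vector_mult_diff_distrib matrix_vector_mult_scaleR inner_diff_left inner_diff_right power2_eq_square algebra_simps)
  have r: "inner b (Q *v b) = inner a (Q *v a) - 2 * inner a (Q *v c) + inner c (Q *v c)"
    unfolding bb using s by (simp add: matrix_vector_mult_diff_distrib inner_diff_left inner_diff_right algebra_simps)
  have "0 \<le> (t - t^2) * inner c (Q *v c)"
    using psd that by (intro mult_nonneg_nonneg) (auto simp: power2_eq_square mult_left_le_one_le)
  then show ?thesis unfolding e1 l r by (simp add: algebra_simps power2_eq_square)
qed

lemma quad_convex:
  fixes Q :: "real^'n^'n"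
  assumes sym: "transpose Q = Q" and psd: "\<forall>d. 0 \<le> inner d (Q *v d)"
  shows "convex_on UNIV (\<lambda>z. inner (z - s) (Q *v (z - s)))"
proof (rule convex_onI)
  fix t :: real and x y :: "real^'n" assume t: "0 < t" "t < 1"
  have e: "(1 - t) *\<^sub>R x + t *\<^sub>R y - s = (1 - t) *\<^sub>R (x - s) + t *\<^sub>R (y - s)" by (simp add: algebra_simps)
  show "inner ((1 - t) *\<^sub>R x + t *\<^sub>R y - s) (Q *v ((1 - t) *\<^sub>R x + t *\<^sub>R y - s))
        \<le> (1 - t) * inner (x - s) (Q *v (x - s)) + t * inner (y - s) (Q *v (y - s))"
    unfolding e by (rule quad_convex_ineq[OF sym psd]) (use t in auto)
qed simp

lemma norm2_convex_ineq:
  fixes a b :: "real^'n"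
  assumes "0 \<le> t" "t \<le> 1"
  shows "norm ((1 - t) *\<^sub>R a + t *\<^sub>R b)^2 \<le> (1 - t) * norm a ^2 + t * norm b ^2"
  using quad_convex_ineq[of "mat 1" t a b] assms
  by (simp add: power2_norm_eq_inner transpose_mat)



lemma convex_opt_sep:
  fixes f :: "'a::euclidean_space \<Rightarrow> real"
  assumes cf: "convex_on UNIV f" and S: "convex S" "xb \<in> S" and mn: "\<forall>z\<in>S. f xb \<le> f z"
  shows "\<exists>w. (\<forall>z. f xb + inner w (z - xb) \<le> f z) \<and> (\<forall>z\<in>S. 0 \<le> inner w (z - xb))"
proof -
  define A where "A = {p :: 'a \<times> real. f (fst p) < snd p}"
  define Bs where "Bs = {p :: 'a \<times> real. fst p \<in> S \<and> snd p \<le> f xb}"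
  have cA: "convex A" unfolding A_def
  proof (rule convexI)
    fix p q :: "'a \<times> real" and u v :: real
    assume p: "p \<in> {p. f (fst p) < snd p}" and q: "q \<in> {p. f (fst p) < snd p}"
      and uv: "0 \<le> u" "0 \<le> v" "u + v = 1"
    have u: "u = 1 - v" using uv by linarith
    have "f (u *\<^sub>R fst p + v *\<^sub>R fst q) \<le> u * f (fst p) + v * f (fst q)"
      unfolding u by (rule convex_onD[OF cf]) (use uv in auto)
    also have "\<dots> < u * snd p + v * snd q"
    proof (cases "u = 0")
      case True then show ?thesis using uv q by simp
    next
      case False
      then have "u > 0" using uv by simp
      then have "u * f (fst p) < u * snd p" using p by simp
      moreover have "v * f (fst q) \<le> v * snd q" using q uv by (intro mult_left_mono) auto
      ultimately show ?thesis by linarith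
    qed
    finally show "u *\<^sub>R p + v *\<^sub>R q \<in> {p. f (fst p) < snd p}" by simp
  qed
  have cB: "convex Bs" unfolding Bs_def
  proof (rule convexI)
    fix p q :: "'a \<times> real" and u v :: real
    assume p: "p \<in> {p. fst p \<in> S \<and> snd p \<le> f xb}" and q: "q \<in> {p. fst p \<in> S \<and> snd p \<le> f xb}"
      and uv: "0 \<le> u" "0 \<le> v" "u + v = 1"
    have "u *\<^sub>R fst p + v *\<^sub>R fst q \<in> S" using S(1) p q uv unfolding convex_def by auto
    moreover have "u * snd p + v * snd q \<le> u * f xb + v * f xb"
      using p q uv by (intro add_mono mult_left_mono) auto
    ultimately show "u *\<^sub>R p + v *\<^sub>R q \<in> {p. fst p \<in> S \<and> snd p \<le> f xb}"
      using uv by (simp add: distrib_right[symmetric])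
  qed
  have "(xb, f xb + 1) \<in> A" "(xb, f xb) \<in> Bs" unfolding A_def Bs_def using S(2) by auto
  then have ne: "A \<noteq> {}" "Bs \<noteq> {}" by blast+
  have dj: "A \<inter> Bs = {}"
  proof (rule ccontr)
    assume "A \<inter> Bs \<noteq> {}"
    then obtain p where "p \<in> A" "p \<in> Bs" by blast
    then have "f (fst p) < snd p" "snd p \<le> f xb" "fst p \<in> S" unfolding A_def Bs_def by auto
    then show False using mn by fastforce
  qed
  obtain a b where ab: "a \<noteq> 0" "\<forall>p\<in>A. inner a p \<le> b" "\<forall>p\<in>Bs. inner a p \<ge> b"
    using separating_hyperplane_sets[OF cA cB ne dj] by blast
  obtain a1 a2 where a: "a = (a1, a2)" by (cases a)
  have hA: "inner a1 z + a2 * r \<le> b" if "f z < r" for z r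
    using ab(2) that unfolding A_def a by auto
  have hB: "inner a1 z + a2 * r \<ge> b" if "z \<in> S" "r \<le> f xb" for z r
    using ab(3) that unfolding Bs_def a by auto
  have a2: "a2 < 0"
  proof (rule ccontr)
    assume "\<not> a2 < 0"
    then consider "a2 = 0" | "a2 > 0" by linarith
    then show False
    proof cases
      case 1
      have "a1 = 0"
      proof (rule ccontr)
        assume "a1 \<noteq> 0"
        then have n: "inner a1 a1 > 0" by simp
        define t where "t = (\<bar>b\<bar> + 1) / inner a1 a1"
        have "inner a1 (t *\<^sub>R a1) + a2 * (f (t *\<^sub>R a1) + 1) \<le> b" by (rule hA) simp
        then have "t * inner a1 a1 \<le> b" using 1 by simp
        moreover have "t * inner a1 a1 = \<bar>b\<bar> + 1" unfolding t_def using n by simp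
        ultimately show False by linarith
      qed
      then show False using ab(1) 1 a by (simp add: zero_prod_def)
    next
      case 2
      have "inner a1 xb + a2 * (f xb + 1) \<le> b" by (rule hA) simp
      moreover have "inner a1 xb + a2 * f xb \<ge> b" by (rule hB) (use S in auto)
      ultimately show False using 2 by (simp add: algebra_simps)
    qed
  qed
  define k where "k = - a2"
  have k: "k > 0" using a2 k_def by simp
  define w where "w = (1 / k) *\<^sub>R a1"
  define c where "c = b / k"
  have iw: "inner w z = inner a1 z / k" for z unfolding w_def by simp
  have A': "inner w z - f z \<le> c" for z
  proof (rule ccontr)
    assume nc: "\<not> inner w z - f z \<le> c"
    define r where "r = (f z + inner w z - c) / 2"
    have "f z < r" unfolding r_def using nc by (simp add: field_simps not_le)
    then have "inner a1 z - k * r \<le> b" using hA[of z r] k_def by simp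
    then have "(inner a1 z - k * r) / k \<le> b / k" using k by (simp add: divide_right_mono)
    then have "inner w z - r \<le> c" unfolding iw c_def using k by (simp add: diff_divide_distrib)
    then show False unfolding r_def using nc by (simp add: field_simps)
  qed
  have B': "inner w z - f xb \<ge> c" if "z \<in> S" for z
  proof -
    have "inner a1 z - k * f xb \<ge> b" using hB[OF that order_refl] k_def by simp
    then have "(inner a1 z - k * f xb) / k \<ge> b / k" using k by (simp add: divide_right_mono)
    then show ?thesis unfolding iw c_def using k by (simp add: diff_divide_distrib)
  qed
  show ?thesis
  proof (intro exI conjI allI ballI)
    fix z
    have "inner w xb - f xb \<ge> c" by (rule B'[OF S(2)])
    then show "f xb + inner w (z - xb) \<le> f z" using A'[of z] by (simp add: inner_diff_right)
  next
    fix z assume "z \<in> S"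
    then have "inner w z - f xb \<ge> c" by (rule B')
    moreover have "inner w xb - f xb \<le> c" by (rule A')
    ultimately show "0 \<le> inner w (z - xb)" by (simp add: inner_diff_right)
  qed
qed




lemma loclip_cont:
  assumes "loc_lipschitz_on S f"
  shows "continuous_on S f"
proof (rule continuous_at_imp_continuous_on, rule ballI)
  fix x assume x: "x \<in> S"
  then obtain e K where e: "e > 0" "K-lipschitz_on (ball x e) f"
    using assms unfolding loc_lipschitz_on_def by blast
  have "continuous_on (ball x e) f" using e(2) by (rule lipschitz_on_continuous_on)
  then show "isCont f x" using continuous_on_eq_continuous_at[OF open_ball, of x e f] e(1) by simp
qed

lemma LS1:
  fixes mu :: "nat \<Rightarrow> real" and LL :: "nat \<Rightarrow> real^'m"
  assumes tau: "1 < \<tau>"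
    and st: "\<forall>j<J. (LL (Suc j) = \<tau> *\<^sub>R LL j \<and> mu (Suc j) = mu j) \<or> (LL (Suc j) = LL j \<and> mu (Suc j) = \<tau> * mu j)"
    and mu0: "mu 0 > 0"
  shows "j \<le> J \<Longrightarrow> mu 0 \<le> mu j \<and> (\<exists>c\<ge>1. LL j = c *\<^sub>R LL 0)"
proof (induction j)
  case 0 show ?case by (auto intro!: exI[of _ 1])
next
  case (Suc j)
  then have IH: "mu 0 \<le> mu j" "\<exists>c\<ge>1. LL j = c *\<^sub>R LL 0" and jJ: "j < J" by auto
  obtain c where c: "c \<ge> 1" "LL j = c *\<^sub>R LL 0" using IH by blast
  from st jJ consider "LL (Suc j) = \<tau> *\<^sub>R LL j" "mu (Suc j) = mu j" | "LL (Suc j) = LL j" "mu (Suc j) = \<tau> * mu j" by blast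
  then show ?case
  proof cases
    case 1
    have "1 * 1 \<le> \<tau> * c" using tau c by (intro mult_mono) auto
    then show ?thesis using 1 IH c by (auto intro!: exI[of _ "\<tau> * c"])
  next
    case 2
    have "mu j > 0" using IH mu0 by linarith
    then have "mu j \<le> \<tau> * mu j" using tau by simp
    then show ?thesis using 2 IH by auto
  qed
qed

lemma LS2:
  fixes mu :: "nat \<Rightarrow> real" and LL :: "nat \<Rightarrow> real^'m" and Pa Pb :: "nat \<Rightarrow> bool"
  assumes tau: "1 < \<tau>" and Lmin: "0 < Lmin" and L0: "\<forall>i. Lmin \<le> LL 0 $ i"
    and st: "\<forall>j<J. \<not> (Pa j \<and> Pb j) \<and> (if \<not> Pa j then LL (Suc j) = \<tau> *\<^sub>R LL j \<and> mu (Suc j) = mu j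
                                     else LL (Suc j) = LL j \<and> mu (Suc j) = \<tau> * mu j)"
    and ms: "\<forall>j\<le>J. Pa j \<and> \<mu>s \<le> mu j \<longrightarrow> Pb j"
    and Ls: "\<forall>j\<le>J. (\<forall>i. Ls \<le> LL j $ i) \<longrightarrow> Pa j"
  shows "j \<le> J \<Longrightarrow> mu j \<le> max (mu 0) (\<tau> * \<mu>s) \<and>
           (\<exists>c. 1 \<le> c \<and> c \<le> max 1 (\<tau> * Ls / Lmin) \<and> LL j = c *\<^sub>R LL 0)"
proof (induction j)
  case 0 show ?case by (auto intro!: exI[of _ 1])
next
  case (Suc j)
  then have IH: "mu j \<le> max (mu 0) (\<tau> * \<mu>s)" "\<exists>c. 1 \<le> c \<and> c \<le> max 1 (\<tau> * Ls / Lmin) \<and> LL j = c *\<^sub>R LL 0"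
    and jJ: "j < J" by auto
  obtain c where c: "1 \<le> c" "c \<le> max 1 (\<tau> * Ls / Lmin)" "LL j = c *\<^sub>R LL 0" using IH by blast
  show ?case
  proof (cases "Pa j")
    case False
    then have s: "LL (Suc j) = \<tau> *\<^sub>R LL j" "mu (Suc j) = mu j" using st jJ by auto
    have "j \<le> J" using jJ by simp
    then have "\<not> (\<forall>i. Ls \<le> LL j $ i)" using Ls False by blast
    then obtain i where i: "LL j $ i < Ls" by (auto simp: not_le)
    have "c * Lmin \<le> c * LL 0 $ i" using L0 c by (intro mult_left_mono) auto
    also have "\<dots> < Ls" using i c by simp
    finally have "c < Ls / Lmin" using Lmin by (simp add: field_simps)
    then have "\<tau> * c \<le> \<tau> * (Ls / Lmin)" using tau by (intro mult_left_mono) auto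
    then have "\<tau> * c \<le> \<tau> * Ls / Lmin" by simp
    moreover have "1 * 1 \<le> \<tau> * c" using tau c by (intro mult_mono) auto
    ultimately show ?thesis using s IH c by (auto intro!: exI[of _ "\<tau> * c"])
  next
    case True
    then have s: "LL (Suc j) = LL j" "mu (Suc j) = \<tau> * mu j" "\<not> Pb j" using st jJ by auto
    have "j \<le> J" using jJ by simp
    then have "mu j < \<mu>s" using ms True s(3) by (meson not_le)
    then have "\<tau> * mu j \<le> \<tau> * \<mu>s" using tau by simp
    then show ?thesis using s IH c by auto
  qed
qed



lemma model_dist:
  fixes xk xi z :: "real^'n" and Q :: "real^'n^'n"
  assumes F: "Fmodel g0 \<phi> xk xi Q z \<le> Fmodel g0 \<phi> xk xi Q xk"
   and Qlow: "mu * norm (z - xk)^2 \<le> inner (z - xk) (Q *v (z - xk))"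
   and mu: "mm \<le> mu" "0 < mm" and xi: "norm xi \<le> Xi" and Mp: "0 \<le> Mp"
   and phi: "\<phi> xk - \<phi> z \<le> 2 * Mp * norm (z - xk)"
  shows "norm (z - xk) \<le> 2 * (Xi + 2 * Mp) / mm"
proof -
  define n where "n = norm (z - xk)"
  have n0: "n \<ge> 0" unfolding n_def by simp
  have Xi0: "Xi \<ge> 0" using xi norm_ge_zero order_trans by blast
  have "inner xi (z - xk) + inner (z - xk) (Q *v (z - xk)) / 2 + \<phi> z - \<phi> xk \<le> 0"
    using F unfolding Fmodel_def by simp
  moreover have "- inner xi (z - xk) \<le> Xi * n"
  proof -
    have "\<bar>inner xi (z - xk)\<bar> \<le> norm xi * n" unfolding n_def by (rule Cauchy_Schwarz_ineq2)
    also have "\<dots> \<le> Xi * n" using xi n0 by (intro mult_right_mono) auto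
    finally show ?thesis by linarith
  qed
  moreover have "mm * n^2 \<le> inner (z - xk) (Q *v (z - xk))"
    using Qlow mu unfolding n_def by (meson mult_right_mono order_trans zero_le_power2)
  moreover have "\<phi> xk - \<phi> z \<le> 2 * Mp * n" using phi n_def by simp
  ultimately have "mm * n^2 / 2 \<le> Xi * n + 2 * Mp * n" by linarith
  then have key: "mm * n^2 / 2 \<le> (Xi + 2 * Mp) * n" by (simp add: distrib_right)
  show ?thesis
  proof (cases "n = 0")
    case True then show ?thesis using Xi0 Mp mu n_def by simp
  next
    case False
    then have "n > 0" using n0 by simp
    have "(mm * n / 2) * n \<le> (Xi + 2 * Mp) * n" using key by (simp add: power2_eq_square)
    then have "mm * n / 2 \<le> Xi + 2 * Mp" using \<open>n > 0\<close> by simp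
    then show ?thesis unfolding n_def[symmetric] using mu by (simp add: field_simps)
  qed
qed

lemma Fmodel_convex:
  fixes Q :: "real^'n^'n"
  assumes "transpose Q = Q" "\<forall>d. 0 \<le> inner d (Q *v d)" "convex_on UNIV \<phi>"
  shows "convex_on UNIV (Fmodel g0 \<phi> xk xi Q)"
proof -
  have c1: "convex_on UNIV (\<lambda>z. g0 xk + inner xi (z - xk))"
  proof (rule convex_onI)
    fix t :: real and x y :: "real^'n"
    have "inner xi ((1 - t) *\<^sub>R x + t *\<^sub>R y - xk) = (1 - t) * inner xi (x - xk) + t * inner xi (y - xk)"
      by (simp add: inner_diff_right inner_add_right algebra_simps)
    then show "g0 xk + inner xi ((1 - t) *\<^sub>R x + t *\<^sub>R y - xk) \<le> (1 - t) * (g0 xk + inner xi (x - xk)) + t * (g0 xk + inner xi (y - xk))"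
      by (simp add: algebra_simps)
  qed simp
  have c2: "convex_on UNIV (\<lambda>z. inner (z - xk) (Q *v (z - xk)) / 2)"
    by (rule convex_on_cdiv) (use quad_convex[OF assms(1,2)] in auto)
  have "convex_on UNIV (\<lambda>z. (g0 xk + inner xi (z - xk)) + inner (z - xk) (Q *v (z - xk)) / 2 + \<phi> z)"
    by (intro convex_on_add c1 c2 assms(3))
  then show ?thesis unfolding Fmodel_def by (simp add: add.assoc)
qed



lemma transpose_col:
  fixes V :: "real^'m^'n"
  shows "(transpose V *v d) $ i = inner (column i V) d"
  by (simp add: vector_matrix_mult_def column_def inner_vec_def mult.commute)

lemma vm_col:
  fixes V :: "real^'m^'n"
  shows "(d v* V) $ i = inner (column i V) d"
  by (simp add: vector_matrix_mult_def column_def inner_vec_def mult.commute)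

lemma arith1:
  fixes a b c p q l u :: real
  shows "(1-u)*(a + b + p/2*l) + u*(a + c + q/2*l) = a + ((1-u)*b + u*c) + ((1-u)*p + u*q)/2*l"
  by (simp add: algebra_simps add_divide_distrib diff_divide_distrib)

lemma Gfun_comp:
  "Gfun g z s V L $ i = g s $ i + inner (column i V) (z - s) + norm (z - s)^2 / 2 * L $ i"
  by (simp add: Gfun_def vm_col)

lemma Gset_convex:
  fixes g :: "real^'n \<Rightarrow> real^'m"
  assumes L: "\<forall>i. 0 \<le> L $ i"
  shows "convex {z. Gfun g z s V L \<in> nonpos_orthant}"
  unfolding convex_alt
proof (intro ballI allI impI)
  fix x y :: "real^'n" and u :: real
  assume x: "x \<in> {z. Gfun g z s V L \<in> nonpos_orthant}" and y: "y \<in> {z. Gfun g z s V L \<in> nonpos_orthant}"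
    and u: "0 \<le> u \<and> u \<le> 1"
  have eq: "(1 - u) *\<^sub>R x + u *\<^sub>R y - s = (1 - u) *\<^sub>R (x - s) + u *\<^sub>R (y - s)" by (simp add: algebra_simps)
  show "(1 - u) *\<^sub>R x + u *\<^sub>R y \<in> {z. Gfun g z s V L \<in> nonpos_orthant}"
    unfolding nonpos_orthant_def mem_Collect_eq
  proof
    fix i
    have "Gfun g x s V L $ i \<le> 0" using x unfolding nonpos_orthant_def by auto
    then have gx: "g s $ i + inner (column i V) (x - s) + norm (x - s)^2 / 2 * L $ i \<le> 0"
      by (simp only: Gfun_comp)
    have "Gfun g y s V L $ i \<le> 0" using y unfolding nonpos_orthant_def by auto
    then have gy: "g s $ i + inner (column i V) (y - s) + norm (y - s)^2 / 2 * L $ i \<le> 0"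
      by (simp only: Gfun_comp)
    have lin: "inner (column i V) ((1 - u) *\<^sub>R x + u *\<^sub>R y - s) = (1 - u) * inner (column i V) (x - s) + u * inner (column i V) (y - s)"
      unfolding eq by (simp add: inner_add_right)
    have nq: "norm ((1 - u) *\<^sub>R x + u *\<^sub>R y - s)^2 \<le> (1 - u) * norm (x - s)^2 + u * norm (y - s)^2"
      unfolding eq by (rule norm2_convex_ineq) (use u in auto)
    have "norm ((1 - u) *\<^sub>R x + u *\<^sub>R y - s)^2 / 2 * L $ i \<le> ((1 - u) * norm (x - s)^2 + u * norm (y - s)^2) / 2 * L $ i"
      using nq L by (intro mult_right_mono divide_right_mono) auto
    moreover have "(1 - u) * (g s $ i + inner (column i V) (x - s) + norm (x - s)^2 / 2 * L $ i)
                  + u * (g s $ i + inner (column i V) (y - s) + norm (y - s)^2 / 2 * L $ i) \<le> 0"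
    proof -
      have "(1 - u) * (g s $ i + inner (column i V) (x - s) + norm (x - s)^2 / 2 * L $ i) \<le> 0"
        using gx u by (intro mult_nonneg_nonpos) auto
      moreover have "u * (g s $ i + inner (column i V) (y - s) + norm (y - s)^2 / 2 * L $ i) \<le> 0"
        using gy u by (intro mult_nonneg_nonpos) auto
      ultimately show ?thesis by linarith
    qed
    moreover have "Gfun g ((1 - u) *\<^sub>R x + u *\<^sub>R y) s V L $ i = g s $ i + ((1 - u) * inner (column i V) (x - s) + u * inner (column i V) (y - s)) + norm ((1 - u) *\<^sub>R x + u *\<^sub>R y - s)^2 / 2 * L $ i"
      by (simp only: Gfun_comp lin)
    moreover note arith1[of u "g s $ i" "inner (column i V) (x - s)" "norm (x - s)^2" "L $ i" "inner (column i V) (y - s)" "norm (y - s)^2"]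
    ultimately show "Gfun g ((1 - u) *\<^sub>R x + u *\<^sub>R y) s V L $ i \<le> 0"
      by linarith
  qed
qed

lemma Q_entry_bound:
  fixes Q :: "real^'n^'n"
  assumes sym: "transpose Q = Q" and b: "\<forall>d. 0 \<le> inner d (Q *v d) \<and> inner d (Q *v d) \<le> c * norm d ^ 2"
  shows "\<bar>Q $ a $ b\<bar> \<le> c"
proof -
  define ea :: "real^'n" where "ea = axis a 1"
  define eb :: "real^'n" where "eb = axis b 1"
  have X: "inner ea (Q *v eb) = Q $ a $ b"
    unfolding ea_def eb_def by (simp add: matrix_vector_mult_basis inner_axis' column_def)
  have s: "inner eb (Q *v ea) = inner ea (Q *v eb)" by (rule sym_inner[OF sym, symmetric])
  have p: "inner (ea + eb) (Q *v (ea + eb)) = inner ea (Q *v ea) + 2 * inner ea (Q *v eb) + inner eb (Q *v eb)"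
    using s by (simp add: matrix_vector_right_distrib inner_add_left inner_add_right)
  have m: "inner (ea - eb) (Q *v (ea - eb)) = inner ea (Q *v ea) - 2 * inner ea (Q *v eb) + inner eb (Q *v eb)"
    using s by (simp add: matrix_vector_mult_diff_distrib inner_diff_left inner_diff_right)
  have nea: "norm ea = 1" "norm eb = 1" unfolding ea_def eb_def by simp_all
  have c0: "c \<ge> 0" using b[rule_format, of ea] nea by simp
  have n2: "norm (ea + eb)^2 \<le> 4" "norm (ea - eb)^2 \<le> 4"
  proof -
    have "norm (ea + eb) \<le> 2" using norm_triangle_ineq[of ea eb] nea by simp
    from power_mono[OF this norm_ge_zero, of 2] show "norm (ea + eb)^2 \<le> 4" by simp
  next
    have "norm (ea - eb) \<le> 2" using norm_triangle_ineq4[of ea eb] nea by simp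
    from power_mono[OF this norm_ge_zero, of 2] show "norm (ea - eb)^2 \<le> 4" by simp
  qed
  have "c * norm (ea + eb)^2 \<le> c * 4" using n2 c0 by (intro mult_left_mono) auto
  then have "inner (ea + eb) (Q *v (ea + eb)) \<le> 4 * c"
    using b[rule_format, of "ea + eb"] by linarith
  moreover have "c * norm (ea - eb)^2 \<le> c * 4" using n2 c0 by (intro mult_left_mono) auto
  moreover have "inner (ea - eb) (Q *v (ea - eb)) \<le> 4 * c"
    using b[rule_format, of "ea - eb"] calculation(2) by linarith
  moreover have "0 \<le> inner (ea + eb) (Q *v (ea + eb))" "0 \<le> inner (ea - eb) (Q *v (ea - eb))" using b by auto
  ultimately have "\<bar>4 * inner ea (Q *v eb)\<bar> \<le> 4 * c" unfolding p m by linarith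
  then show ?thesis using X by simp
qed

lemma mat_norm_bound:
  fixes A :: "real^'n^'m"
  assumes "\<forall>a b. \<bar>A $ a $ b\<bar> \<le> c"
  shows "norm A \<le> real CARD('m) * (real CARD('n) * c)"
proof -
  have "norm A \<le> (\<Sum>a\<in>UNIV. norm (A $ a))" by (simp add: norm_vec_def L2_set_le_sum)
  also have "\<dots> \<le> (\<Sum>a\<in>(UNIV::'m set). real CARD('n) * c)"
  proof (rule sum_mono)
    fix a
    have "norm (A $ a) \<le> (\<Sum>b\<in>UNIV. \<bar>A $ a $ b\<bar>)" by (rule norm_le_l1_cart)
    also have "\<dots> \<le> (\<Sum>b\<in>(UNIV::'n set). c)" using assms by (intro sum_mono) auto
    finally show "norm (A $ a) \<le> real CARD('n) * c" by simp
  qed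
  finally show ?thesis by simp
qed

lemma mat_vec_bound:
  fixes A :: "real^'n^'m"
  assumes "\<forall>a b. \<bar>A $ a $ b\<bar> \<le> c"
  shows "norm (A *v x) \<le> real CARD('m) * real CARD('n) * c * norm x"
proof -
  have "onorm ((*v) A) \<le> real CARD('m) * real CARD('n) * c"
    by (rule onorm_le_matrix_component) (use assms in auto)
  moreover have "norm (A *v x) \<le> onorm ((*v) A) * norm x"
    by (rule onorm[OF matrix_vector_mul_bounded_linear])
  ultimately show ?thesis by (meson mult_right_mono norm_ge_zero order_trans)
qed





lemma quad_expand:
  fixes Q :: "real^'n^'n"
  assumes "transpose Q = Q"
  shows "inner (a + e) (Q *v (a + e)) = inner a (Q *v a) + 2 * inner (Q *v a) e + inner e (Q *v e)"
proof -
  have "inner a (Q *v e) = inner e (Q *v a)" by (rule sym_inner[OF assms])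
  then show ?thesis by (simp add: matrix_vector_right_distrib inner_add_left inner_add_right inner_commute)
qed

lemma arith2:
  fixes g A B C D E p p2 :: real
  shows "g + (A + B) + (C + 2 * D + E) / 2 + p - (g + A + C / 2 + p2) = B + D + E / 2 + p - p2"
  by (simp add: field_simps)

lemma Fmodel_diff:
  fixes Q :: "real^'n^'n"
  assumes "transpose Q = Q"
  shows "Fmodel g0 \<phi> xk xi Q z - Fmodel g0 \<phi> xk xi Q xb =
     inner (xi + Q *v (xb - xk)) (z - xb) + inner (z - xb) (Q *v (z - xb)) / 2 + \<phi> z - \<phi> xb"
proof -
  have e: "z - xk = (xb - xk) + (z - xb)" by simp
  have q: "inner (z - xk) (Q *v (z - xk)) = inner (xb - xk) (Q *v (xb - xk)) + 2 * inner (Q *v (xb - xk)) (z - xb) + inner (z - xb) (Q *v (z - xb))"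
    unfolding e by (rule quad_expand[OF assms])
  have l: "inner xi (z - xk) = inner xi (xb - xk) + inner xi (z - xb)"
    by (simp add: inner_diff_right)
  show ?thesis unfolding Fmodel_def q l inner_add_left by (rule arith2)
qed

lemma quad_err_regular:
  fixes \<phi> :: "'a::real_inner \<Rightarrow> real"
  assumes sg: "\<forall>z. \<phi> x + inner v (z - x) - C * norm (z - x)^2 \<le> \<phi> z" and C: "C \<ge> 0"
  shows "v \<in> regular_subdiff \<phi> x"
  unfolding regular_subdiff_def mem_Collect_eq
proof (intro allI impI)
  fix e :: real assume e: "e > 0"
  show "\<exists>d>0. \<forall>z. dist z x < d \<longrightarrow> \<phi> x + inner v (z - x) - e * norm (z - x) \<le> \<phi> z"
  proof (intro exI conjI allI impI)
    show "e / (C + 1) > 0" using e C by simp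
    fix z assume z: "dist z x < e / (C + 1)"
    have "C * norm (z - x) \<le> e"
    proof -
      have "C * norm (z - x) \<le> C * (e / (C + 1))" using z C by (intro mult_left_mono) (auto simp: dist_norm)
      also have "\<dots> \<le> (C + 1) * (e / (C + 1))" using e C by (intro mult_right_mono) auto
      also have "\<dots> = e" using C by simp
      finally show ?thesis .
    qed
    then have "C * norm (z - x)^2 \<le> e * norm (z - x)"
      by (simp add: power2_eq_square mult.assoc[symmetric] mult_right_mono)
    then show "\<phi> x + inner v (z - x) - e * norm (z - x) \<le> \<phi> z" using sg by smt
  qed
qed

lemma regular_limiting:
  assumes "v \<in> regular_subdiff f x"
  shows "v \<in> limiting_subdiff f x"
  unfolding limiting_subdiff_def using assms
  by (intro CollectI exI[of _ "\<lambda>k. x"] exI[of _ "\<lambda>k. v"]) auto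

lemma normal_cone_conv:
  assumes x: "x \<in> S" and y: "\<forall>z\<in>S. inner y (z - x) \<le> 0"
  shows "y \<in> limiting_normal_cone S x"
proof -
  have "y \<in> regular_normal_cone S x"
    unfolding regular_normal_cone_def using x y
    by (auto intro!: exI[of _ 1] order_trans[OF _ mult_nonneg_nonneg])
  then show ?thesis unfolding limiting_normal_cone_def using x
    by (intro if_P[THEN ssubst[of _ _ "\<lambda>A. y \<in> A"]] CollectI exI[of _ "\<lambda>k. x"] exI[of _ "\<lambda>k. y"]) auto
qed


lemma norm6:
  fixes a :: "'a::real_normed_vector" and b :: "'b::real_normed_vector" and c :: "'c::real_normed_vector"
    and d :: "'d::real_normed_vector" and e :: "'e::real_normed_vector" and f :: "'f::real_normed_vector"
  shows "norm ((a, b, c, d, e), f) \<le> norm a + norm b + norm c + norm d + norm e + norm f"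
  using norm_Pair_le[of "(a, b, c, d, e)" f] norm_Pair_le[of a "(b, c, d, e)"] norm_Pair_le[of b "(c, d, e)"]
    norm_Pair_le[of c "(d, e)"] norm_Pair_le[of d e] by linarith

theorem proposition4p1:
  fixes g0 :: "real^'n \<Rightarrow> real" and g :: "real^'n \<Rightarrow> real^'m" and \<phi> :: "real^'n \<Rightarrow> real"
    and Oset :: "(real^'n) set"
    and \<mu>min \<mu>max Lmin Lmax M \<beta>C \<beta>S \<alpha> \<tau> :: real
    and x \<xi> :: "nat \<Rightarrow> real^'n" and V :: "nat \<Rightarrow> real^'m^'n" and jk :: "nat \<Rightarrow> nat"
    and \<mu> :: "nat \<Rightarrow> nat \<Rightarrow> real" and L :: "nat \<Rightarrow> nat \<Rightarrow> real^'m"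
    and Q :: "nat \<Rightarrow> nat \<Rightarrow> real^'n^'n"
    and y v xb :: "nat \<Rightarrow> nat \<Rightarrow> real^'n" and lam :: "nat \<Rightarrow> nat \<Rightarrow> real^'m"
  assumes
    \<comment> \<open>Assumption 1\<close>
    A1_O: "open Oset" "convex Oset" "Gamma_set g \<subseteq> Oset" "Gamma_set g \<noteq> {}"
  and A1_g0: "loc_lipschitz_on Oset g0" "\<forall>z\<in>Oset. upper_C2_at g0 z"
  and A1_g: "\<forall>i. loc_lipschitz_on UNIV (\<lambda>z. g z $ i) \<and> (\<forall>z. upper_C2_at (\<lambda>z. g z $ i) z)"
  and A1_phi: "convex_on UNIV \<phi>"
  and A1_bdd: "\<exists>c. \<forall>z\<in>Gamma_set g. c \<le> g0 z + \<phi> z"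
    \<comment> \<open>parameters\<close>
  and par: "0 < \<mu>min" "\<mu>min \<le> \<mu>max" "0 < Lmin" "Lmin \<le> Lmax" "0 < M" "0 < \<beta>C" "0 < \<beta>S"
           "0 < \<alpha>" "1 < \<tau>"
    \<comment> \<open>Algorithm iMBA\<close>
  and x0: "x 0 \<in> Gamma_set g"
  and xi_sub: "\<forall>k. \<xi> k \<in> limiting_subdiff g0 (x k)"
  and V_sub: "\<forall>k i. column i (V k) \<in> limiting_subdiff (\<lambda>z. g z $ i) (x k)"
  and mu0: "\<forall>k. \<mu>min \<le> \<mu> k 0 \<and> \<mu> k 0 \<le> \<mu>max"
  and L0: "\<forall>k i. Lmin \<le> L k 0 $ i \<and> L k 0 $ i \<le> Lmax"
  and Qkj: "\<forall>k. \<forall>j\<le>jk k. transpose (Q k j) = Q k j \<and>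
              (\<forall>d. \<mu> k j * norm d ^ 2 \<le> inner d (Q k j *v d) \<and>
                   inner d (Q k j *v d) \<le> (\<mu> k j + M) * norm d ^ 2)"
  and xbar: "\<forall>k. \<forall>j\<le>jk k. Gfun g (xb k j) (x k) (V k) (L k j) \<in> nonpos_orthant \<and>
              (\<forall>z. Gfun g z (x k) (V k) (L k j) \<in> nonpos_orthant \<longrightarrow>
                   Fmodel g0 \<phi> (x k) (\<xi> k) (Q k j) (xb k j) \<le> Fmodel g0 \<phi> (x k) (\<xi> k) (Q k j) z)"
  and inexact_descent: "\<forall>k. \<forall>j\<le>jk k.
              Fmodel g0 \<phi> (x k) (\<xi> k) (Q k j) (y k j) \<le> Fmodel g0 \<phi> (x k) (\<xi> k) (Q k j) (x k)"
  and inexact_sub: "\<forall>k. \<forall>j\<le>jk k. v k j \<in> limiting_subdiff \<phi> (y k j) \<and> (\<forall>i. 0 \<le> lam k j $ i)"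
  and inexact_feas: "\<forall>k. \<forall>j\<le>jk k.
              max (- inner (lam k j) (Gfun g (y k j) (x k) (V k) (L k j))) 0
              + Max (range (\<lambda>i. max (Gfun g (y k j) (x k) (V k) (L k j) $ i) 0))
              \<le> \<beta>C / 2 * norm (y k j - x k) ^ 2"
  and inexact_stat: "\<forall>k. \<forall>j\<le>jk k.
              norm (\<xi> k + Q k j *v (y k j - x k) + v k j + V k *v lam k j
                    + (inner (L k j) (lam k j)) *\<^sub>R (y k j - x k)) \<le> \<beta>S * norm (y k j - x k)"
  and accept: "\<forall>k. g (y k (jk k)) \<in> nonpos_orthant \<and>
              g0 (y k (jk k)) + \<phi> (y k (jk k)) \<le> g0 (x k) + \<phi> (x k) - \<alpha> / 2 * norm (y k (jk k) - x k) ^ 2"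
  and reject: "\<forall>k. \<forall>j<jk k.
              \<not> (g (y k j) \<in> nonpos_orthant \<and>
                 g0 (y k j) + \<phi> (y k j) \<le> g0 (x k) + \<phi> (x k) - \<alpha> / 2 * norm (y k j - x k) ^ 2) \<and>
              (if g (y k j) \<notin> nonpos_orthant
               then L k (Suc j) = \<tau> *\<^sub>R L k j \<and> \<mu> k (Suc j) = \<mu> k j
               else L k (Suc j) = L k j \<and> \<mu> k (Suc j) = \<tau> * \<mu> k j)"
  and update: "\<forall>k. x (Suc k) = y k (jk k)"
    \<comment> \<open>Assumption 2\<close>
  and A2: "\<forall>k. \<forall>j\<le>jk k. metrically_subregular
              (\<lambda>z. {Gfun g z (x k) (V k) (L k j) - w | w. w \<in> nonpos_orthant}) (xb k j) 0"
    \<comment> \<open>Assumption 3\<close>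
  and A3: "bounded (range x)"
    \<comment> \<open>Assumption 4\<close>
  and A4: "\<forall>p\<in>cluster_points (\<lambda>k. ((x k, L k (jk k), V k, \<xi> k, Q k (jk k)), xb k (jk k))).
              partial_BMP g (fst p) (snd p)"
  shows "\<exists>khat. \<exists>\<beta>>0. \<forall>k\<ge>khat. \<exists>l\<in>Mset g \<phi> (x k, L k (jk k), V k, \<xi> k, Q k (jk k)) (xb k (jk k)).
            norm l \<le> \<beta>"
proof -
  have tau: "1 < \<tau>" "0 < \<tau>" using par by auto
  have feas_x: "x k \<in> Gamma_set g" for k
  proof (induction k)
    case 0 show ?case using x0 .
  next
    case (Suc k) show ?case using accept update unfolding Gamma_set_def by simp
  qed
  obtain R where R: "\<And>k. norm (x k) \<le> R" using A3 unfolding bounded_iff by auto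
  have R0: "R \<ge> 0" using R[of 0] norm_ge_zero order_trans by blast
  have gcont: "continuous_on UNIV (\<lambda>z. g z $ i)" for i using A1_g loclip_cont by blast
  have closedG: "closed (Gamma_set g)"
  proof -
    have "Gamma_set g = {z. \<forall>i. g z $ i \<le> 0}" unfolding Gamma_set_def nonpos_orthant_def by simp
    also have "closed \<dots>"
      by (intro closed_Collect_all closed_Collect_le gcont continuous_on_const)
    finally show ?thesis .
  qed
  have GO: "Gamma_set g \<subseteq> Oset" using A1_O by simp
  define K where "K = Gamma_set g \<inter> cball 0 R"
  have cK: "compact K" unfolding K_def by (intro closed_Int_compact closedG compact_cball)
  have KO: "K \<subseteq> Oset" using GO K_def by auto
  have xK: "x k \<in> K" for k using feas_x R unfolding K_def by simp
  obtain r0 \<rho>0 D0 where r0: "r0 > 0"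
    and g0loc: "\<forall>z\<in>K. \<forall>v\<in>limiting_subdiff g0 z. norm v \<le> D0 \<and>
            (\<forall>y\<in>ball z r0. g0 y \<le> g0 z + inner v (y - z) + \<rho>0 * norm (y - z)^2)"
    using uc2_compact[OF cK] A1_g0(2) KO by blast
  have "\<forall>i. \<exists>r>0. \<exists>\<rho> D. \<forall>z\<in>K. \<forall>v\<in>limiting_subdiff (\<lambda>z. g z $ i) z. norm v \<le> D \<and>
            (\<forall>y\<in>ball z r. g y $ i \<le> g z $ i + inner v (y - z) + \<rho> * norm (y - z)^2)"
    using uc2_compact[OF cK] A1_g by blast
  then obtain rg \<rho>g Dg where rg: "\<And>i. rg i > 0"
    and gloc: "\<And>i. \<forall>z\<in>K. \<forall>v\<in>limiting_subdiff (\<lambda>z. g z $ i) z. norm v \<le> Dg i \<and>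
            (\<forall>y\<in>ball z (rg i). g y $ i \<le> g z $ i + inner v (y - z) + \<rho>g i * norm (y - z)^2)"
    by metis
  have xiB: "norm (\<xi> k) \<le> D0" for k using g0loc xK xi_sub by blast
  have colB: "norm (column i (V k)) \<le> Dg i" for i k using gloc xK V_sub by blast
  have phicont: "continuous_on UNIV \<phi>" using convex_on_continuous[OF open_UNIV A1_phi] .
  have phibd: "\<exists>M. \<forall>z. norm z \<le> T \<longrightarrow> \<bar>\<phi> z\<bar> \<le> M" for T
  proof -
    have "bounded (\<phi> ` cball 0 T)"
      by (intro compact_imp_bounded compact_continuous_image continuous_on_subset[OF phicont]) auto
    then obtain a where "\<forall>z\<in>cball 0 T. \<bar>\<phi> z\<bar> \<le> a" unfolding bounded_iff by auto
    then show ?thesis by (intro exI[of _ a]) (auto simp: mem_cball_0)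
  qed
  obtain Mp where Mp: "\<And>z. norm z \<le> R + 1 \<Longrightarrow> \<bar>\<phi> z\<bar> \<le> Mp" using phibd[of "R + 1"] by blast
  have Mp0: "Mp \<ge> 0" using Mp[of 0] R0 by simp
  define Dy where "Dy = 2 * (D0 + 2 * Mp) / \<mu>min"
  have D00: "D0 \<ge> 0" using xiB[of 0] norm_ge_zero order_trans by blast
  have Dy0: "Dy \<ge> 0" unfolding Dy_def using D00 Mp0 par by simp
  have st: "\<forall>j<jk k. (L k (Suc j) = \<tau> *\<^sub>R L k j \<and> \<mu> k (Suc j) = \<mu> k j) \<or> (L k (Suc j) = L k j \<and> \<mu> k (Suc j) = \<tau> * \<mu> k j)" for k
  proof (intro allI impI)
    fix j assume "j < jk k"
    then have "if g (y k j) \<notin> nonpos_orthant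
               then L k (Suc j) = \<tau> *\<^sub>R L k j \<and> \<mu> k (Suc j) = \<mu> k j
               else L k (Suc j) = L k j \<and> \<mu> k (Suc j) = \<tau> * \<mu> k j" using reject by blast
    then show "(L k (Suc j) = \<tau> *\<^sub>R L k j \<and> \<mu> k (Suc j) = \<mu> k j) \<or> (L k (Suc j) = L k j \<and> \<mu> k (Suc j) = \<tau> * \<mu> k j)"
      by (auto split: if_splits)
  qed
  have lb: "\<mu> k 0 \<le> \<mu> k j \<and> (\<exists>c\<ge>1. L k j = c *\<^sub>R L k 0)" if "j \<le> jk k" for k j
  proof -
    have "0 < \<mu> k 0" using mu0 par(1) by (meson less_le_trans)
    then show ?thesis using LS1[OF tau(1) st[of k], of j] that by blast
  qed
  have muge: "\<mu>min \<le> \<mu> k j" if "j \<le> jk k" for k j using lb[OF that] mu0[rule_format, of k] by linarith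
  have Lge: "Lmin \<le> L k j $ i" if jj: "j \<le> jk k" for k j i
  proof -
    obtain c where c: "c \<ge> 1" "L k j = c *\<^sub>R L k 0" using lb[OF jj] by blast
    have L0i: "Lmin \<le> L k 0 $ i" using L0 by blast
    then have "1 * L k 0 $ i \<le> c * L k 0 $ i" using c par by (intro mult_right_mono) auto
    then show ?thesis using c L0i by simp
  qed
  have Qlow: "\<mu>min * norm d^2 \<le> inner d (Q k j *v d)" if "j \<le> jk k" for k j d
  proof -
    have "\<mu>min * norm d^2 \<le> \<mu> k j * norm d^2" using muge[OF that] by (intro mult_right_mono) auto
    also have "\<dots> \<le> inner d (Q k j *v d)" using Qkj that by blast
    finally show ?thesis .
  qed
  have philow: "\<phi> (x k) - \<phi> z \<le> 2 * Mp * norm (z - x k)" for k z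
    using convex_lower_bound[OF A1_phi Mp R[of k], of "z - x k"] by simp
  have Fxx: "Fmodel g0 \<phi> (x k) (\<xi> k) Qm (x k) = g0 (x k) + \<phi> (x k)" for k Qm
    unfolding Fmodel_def by simp
  have mdist: "norm (z - x k) \<le> Dy" if jj: "j \<le> jk k"
    and Fz: "Fmodel g0 \<phi> (x k) (\<xi> k) (Q k j) z \<le> Fmodel g0 \<phi> (x k) (\<xi> k) (Q k j) (x k)" for k j z
  proof -
    have "\<mu> k j * norm (z - x k)^2 \<le> inner (z - x k) (Q k j *v (z - x k))" using Qkj jj by blast
    then show ?thesis unfolding Dy_def
      by (rule model_dist[OF Fz _ muge[OF jj] par(1) xiB[of k] Mp0 philow[of k z]])
  qed
  have ydist: "norm (y k j - x k) \<le> Dy" if jj: "j \<le> jk k" for k j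
    using mdist[OF jj] inexact_descent jj by blast
  have Gxx: "Gfun g (x k) (x k) V' L' = g (x k)" for k V' L' unfolding Gfun_def by simp
  have xbdist: "norm (xb k j - x k) \<le> Dy" if jj: "j \<le> jk k" for k j
  proof -
    have "g (x k) \<in> nonpos_orthant" using feas_x unfolding Gamma_set_def by simp
    then have "Fmodel g0 \<phi> (x k) (\<xi> k) (Q k j) (xb k j) \<le> Fmodel g0 \<phi> (x k) (\<xi> k) (Q k j) (x k)"
      using xbar jj Gxx by metis
    then show ?thesis by (rule mdist[OF jj])
  qed
  have ynorm: "norm (y k j) \<le> R + Dy" if jj: "j \<le> jk k" for k j
    using ydist[OF jj] R[of k] norm_triangle_sub[of "y k j" "x k"] by linarith
  have xbnorm: "norm (xb k j) \<le> R + Dy" if jj: "j \<le> jk k" for k j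
    using xbdist[OF jj] R[of k] norm_triangle_sub[of "xb k j" "x k"] by linarith
  define K2 where "K2 = Gamma_set g \<inter> cball 0 (R + Dy)"
  have cK2: "compact K2" unfolding K2_def by (intro closed_Int_compact closedG compact_cball)
  have K2O: "K2 \<subseteq> Oset" using GO K2_def by auto
  have KK2: "K \<subseteq> K2" unfolding K_def K2_def using Dy0 by auto
  have g0cont: "continuous_on Oset g0" using loclip_cont A1_g0(1) by blast
  obtain G0m where G0m: "\<And>z. z \<in> K2 \<Longrightarrow> \<bar>g0 z\<bar> \<le> G0m"
  proof -
    have "bounded (g0 ` K2)"
      by (intro compact_imp_bounded compact_continuous_image continuous_on_subset[OF g0cont K2O] cK2)
    then show ?thesis using that unfolding bounded_iff by auto
  qed
  have "\<exists>G. \<forall>z. norm z \<le> R + Dy \<longrightarrow> \<bar>g z $ i\<bar> \<le> G" for i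
  proof -
    have "bounded ((\<lambda>z. g z $ i) ` cball 0 (R + Dy))"
      by (intro compact_imp_bounded compact_continuous_image continuous_on_subset[OF gcont]) auto
    then obtain a where "\<forall>z\<in>cball 0 (R + Dy). \<bar>g z $ i\<bar> \<le> a" unfolding bounded_iff by auto
    then show ?thesis by (intro exI[of _ a]) (auto simp: mem_cball_0)
  qed
  then obtain Gm where Gm: "\<And>i z. norm z \<le> R + Dy \<Longrightarrow> \<bar>g z $ i\<bar> \<le> Gm i" by metis
  define \<rho>0' where "\<rho>0' = \<bar>\<rho>0\<bar> + 2 * G0m / r0^2 + D0 / r0"
  define \<mu>s where "\<mu>s = 2 * \<rho>0' + \<alpha>"
  have g0glob: "g0 z \<le> g0 (x k) + inner (\<xi> k) (z - x k) + \<rho>0' * norm (z - x k)^2" if zK2: "z \<in> K2" for k z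
  proof -
    have loc: "\<forall>y\<in>ball (x k) r0. g0 y \<le> g0 (x k) + inner (\<xi> k) (y - x k) + \<rho>0 * norm (y - x k)^2"
      using g0loc xK xi_sub by blast
    have fx: "\<bar>g0 (x k)\<bar> \<le> G0m" using G0m xK KK2 by blast
    show ?thesis unfolding \<rho>0'_def by (rule uc2_global[OF r0 loc xiB fx G0m[OF zK2]])
  qed
  have ms: "g0 (y k j) + \<phi> (y k j) \<le> g0 (x k) + \<phi> (x k) - \<alpha> / 2 * norm (y k j - x k) ^ 2"
    if jj: "j \<le> jk k" and fy: "g (y k j) \<in> nonpos_orthant" and mj: "\<mu>s \<le> \<mu> k j" for k j
  proof -
    define d where "d = y k j - x k"
    define N where "N = norm d ^ 2"
    define q where "q = inner d (Q k j *v d)"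
    define IP where "IP = inner (\<xi> k) d"
    have yK2: "y k j \<in> K2" using fy ynorm[OF jj] unfolding K2_def Gamma_set_def by simp
    have h1: "g0 (y k j) \<le> g0 (x k) + IP + \<rho>0' * N" using g0glob[OF yK2] unfolding d_def N_def IP_def .
    have h2: "IP + q / 2 + \<phi> (y k j) \<le> \<phi> (x k)"
      using inexact_descent jj unfolding Fmodel_def d_def q_def IP_def by (simp add: add.assoc)
    have h3: "\<mu> k j * N \<le> q" using Qkj jj unfolding N_def q_def d_def by blast
    have h4: "\<mu>s * N \<le> \<mu> k j * N" using mj unfolding N_def by (intro mult_right_mono) auto
    have h5: "\<mu>s * N = 2 * \<rho>0' * N + \<alpha> * N" unfolding \<mu>s_def by (simp add: algebra_simps)
    have "g0 (y k j) + \<phi> (y k j) \<le> g0 (x k) + \<phi> (x k) - \<alpha> / 2 * N"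
      using h1 h2 h3 h4 h5 by linarith
    then show ?thesis unfolding N_def d_def .
  qed
  define \<rho>g' where "\<rho>g' i = \<bar>\<rho>g i\<bar> + 2 * Gm i / (rg i)^2 + Dg i / rg i" for i
  define Ls where "Ls = \<beta>C + 2 * (\<Sum>i\<in>UNIV. \<bar>\<rho>g' i\<bar>)"
  have Lsf: "g (y k j) \<in> nonpos_orthant" if jj: "j \<le> jk k" and LL: "\<forall>i. Ls \<le> L k j $ i" for k j
    unfolding nonpos_orthant_def mem_Collect_eq
  proof (rule allI)
    fix i
    define d where "d = y k j - x k"
    define N where "N = norm d ^ 2"
    define IP where "IP = inner (column i (V k)) d"
    define Gy where "Gy = Gfun g (y k j) (x k) (V k) (L k j)"
    have loc: "\<forall>z\<in>ball (x k) (rg i). g z $ i \<le> g (x k) $ i + inner (column i (V k)) (z - x k) + \<rho>g i * norm (z - x k)^2"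
      using gloc[of i] xK V_sub by blast
    have fx: "\<bar>g (x k) $ i\<bar> \<le> Gm i" using Gm R[of k] Dy0 by force
    have fy: "\<bar>g (y k j) $ i\<bar> \<le> Gm i" using Gm ynorm[OF jj] by blast
    have glob: "g (y k j) $ i \<le> g (x k) $ i + IP + \<rho>g' i * N"
      unfolding \<rho>g'_def IP_def N_def d_def
      by (rule uc2_global[where f="\<lambda>z. g z $ i", OF rg loc colB fx fy])
    have comp: "Gy $ i = g (x k) $ i + IP + N / 2 * L k j $ i"
      unfolding Gy_def IP_def N_def d_def by (rule Gfun_comp)
    have feas: "Gy $ i \<le> \<beta>C / 2 * N"
    proof -
      have fin: "finite (range (\<lambda>i. max (Gy $ i) 0))" by (rule finite_imageI) simp
      have "Gy $ i \<le> max (Gy $ i) 0" by simp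
      also have "\<dots> \<le> Max (range (\<lambda>i. max (Gy $ i) 0))" by (rule Max_ge[OF fin]) simp
      finally have a: "Gy $ i \<le> Max (range (\<lambda>i. max (Gy $ i) 0))" .
      have b: "0 \<le> max (- inner (lam k j) Gy) 0" by simp
      have c: "max (- inner (lam k j) Gy) 0 + Max (range (\<lambda>i. max (Gy $ i) 0)) \<le> \<beta>C / 2 * N"
        using inexact_feas jj unfolding Gy_def N_def d_def by blast
      show ?thesis using a b c by linarith
    qed
    have "\<rho>g' i \<le> (\<Sum>i\<in>UNIV. \<bar>\<rho>g' i\<bar>)"
      using member_le_sum[of i UNIV "\<lambda>i. \<bar>\<rho>g' i\<bar>"] by simp
    then have Lsi: "\<beta>C + 2 * \<rho>g' i \<le> L k j $ i" using LL unfolding Ls_def by (smt (verit))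
    have N0: "N \<ge> 0" unfolding N_def by simp
    have "N / 2 * (\<beta>C + 2 * \<rho>g' i) \<le> N / 2 * L k j $ i" using Lsi N0 by (intro mult_left_mono) auto
    moreover have "N / 2 * (\<beta>C + 2 * \<rho>g' i) = \<beta>C / 2 * N + \<rho>g' i * N" by (simp add: algebra_simps)
    ultimately show "g (y k j) $ i \<le> 0" using glob comp feas by linarith
  qed
  have ub: "\<mu> k (jk k) \<le> max (\<mu> k 0) (\<tau> * \<mu>s) \<and> (\<exists>c. 1 \<le> c \<and> c \<le> max 1 (\<tau> * Ls / Lmin) \<and> L k (jk k) = c *\<^sub>R L k 0)" for k
  proof (rule LS2[where Pa="\<lambda>j. g (y k j) \<in> nonpos_orthant"
        and Pb="\<lambda>j. g0 (y k j) + \<phi> (y k j) \<le> g0 (x k) + \<phi> (x k) - \<alpha> / 2 * norm (y k j - x k) ^ 2"])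
    show "1 < \<tau>" "0 < Lmin" using par by auto
    show "\<forall>i. Lmin \<le> L k 0 $ i" using L0 by blast
    show "\<forall>j<jk k. \<not> (g (y k j) \<in> nonpos_orthant \<and> g0 (y k j) + \<phi> (y k j) \<le> g0 (x k) + \<phi> (x k) - \<alpha> / 2 * norm (y k j - x k) ^ 2) \<and>
      (if \<not> g (y k j) \<in> nonpos_orthant then L k (Suc j) = \<tau> *\<^sub>R L k j \<and> \<mu> k (Suc j) = \<mu> k j
       else L k (Suc j) = L k j \<and> \<mu> k (Suc j) = \<tau> * \<mu> k j)" using reject by blast
    show "\<forall>j\<le>jk k. g (y k j) \<in> nonpos_orthant \<and> \<mu>s \<le> \<mu> k j \<longrightarrow>
        g0 (y k j) + \<phi> (y k j) \<le> g0 (x k) + \<phi> (x k) - \<alpha> / 2 * norm (y k j - x k) ^ 2" using ms by blast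
    show "\<forall>j\<le>jk k. (\<forall>i. Ls \<le> L k j $ i) \<longrightarrow> g (y k j) \<in> nonpos_orthant" using Lsf by blast
  qed simp
  define \<mu>bar where "\<mu>bar = max \<mu>max (\<tau> * \<mu>s)"
  define Lbar where "Lbar = max 1 (\<tau> * Ls / Lmin) * Lmax"
  have mubd: "\<mu> k (jk k) \<le> \<mu>bar" for k using ub[of k] mu0[rule_format, of k] unfolding \<mu>bar_def by (simp add: max_def split: if_splits)
  have Lbd: "0 \<le> L k (jk k) $ i \<and> L k (jk k) $ i \<le> Lbar" for k i
  proof -
    obtain c where c: "1 \<le> c" "c \<le> max 1 (\<tau> * Ls / Lmin)" "L k (jk k) = c *\<^sub>R L k 0" using ub[of k] by blast
    have L0i: "Lmin \<le> L k 0 $ i" "L k 0 $ i \<le> Lmax" using L0 by auto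
    have "c * L k 0 $ i \<le> max 1 (\<tau> * Ls / Lmin) * Lmax" using c L0i par by (intro mult_mono) auto
    moreover have "0 \<le> c * L k 0 $ i" using c L0i par by simp
    ultimately show ?thesis using c unfolding Lbar_def by simp
  qed
  obtain Mp2 where Mp2: "\<And>z. norm z \<le> R + Dy + 1 \<Longrightarrow> \<bar>\<phi> z\<bar> \<le> Mp2" using phibd[of "R + Dy + 1"] by blast
  have mubar0: "\<mu>min \<le> \<mu>bar" using mubd[of 0] muge[of "jk 0" 0] by simp
  define Yb where "Yb = D0 + real CARD('n) * real CARD('n) * (\<mu>bar + M) * Dy + (2 * Mp2 + (\<mu>bar + M) / 2)"
  have Qentry: "\<bar>Q k (jk k) $ a $ b\<bar> \<le> \<mu>bar + M" for k a b
  proof (rule Q_entry_bound)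
    show "transpose (Q k (jk k)) = Q k (jk k)" using Qkj by blast
    show "\<forall>d. 0 \<le> inner d (Q k (jk k) *v d) \<and> inner d (Q k (jk k) *v d) \<le> (\<mu>bar + M) * norm d ^ 2"
    proof
      fix d :: "real^'n"
      have a: "\<mu>min * norm d^2 \<le> inner d (Q k (jk k) *v d)" using Qlow by blast
      have b: "inner d (Q k (jk k) *v d) \<le> (\<mu> k (jk k) + M) * norm d ^ 2" using Qkj by blast
      have c: "(\<mu> k (jk k) + M) * norm d ^ 2 \<le> (\<mu>bar + M) * norm d ^ 2" using mubd[of k] by (intro mult_right_mono) auto
      have "0 \<le> \<mu>min * norm d^2" using par by simp
      then show "0 \<le> inner d (Q k (jk k) *v d) \<and> inner d (Q k (jk k) *v d) \<le> (\<mu>bar + M) * norm d ^ 2"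
        using a b c by linarith
    qed
  qed
  have key: "\<exists>w\<phi> yv. (x k, L k (jk k), V k, \<xi> k, Q k (jk k)) \<in> Uset \<and>
      xb k (jk k) \<in> Sset g (x k, L k (jk k), V k, \<xi> k, Q k (jk k)) \<and>
      w\<phi> \<in> limiting_subdiff \<phi> (xb k (jk k)) \<and>
      yv \<in> limiting_normal_cone (Sset g (x k, L k (jk k), V k, \<xi> k, Q k (jk k))) (xb k (jk k)) \<and>
      \<xi> k + Q k (jk k) *v (xb k (jk k) - x k) + w\<phi> + yv = 0 \<and> norm yv \<le> Yb" for k
  proof -
    define J where "J = jk k"
    have JJ: "J \<le> jk k" unfolding J_def by simp
    define Qk where "Qk = Q k J"
    define Lk where "Lk = L k J"
    define xbk where "xbk = xb k J"
    define S where "S = {z. Gfun g z (x k) (V k) Lk \<in> nonpos_orthant}"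
    have SS: "Sset g (x k, Lk, V k, \<xi> k, Qk) = S" unfolding Sset_def S_def by simp
    have Qsym: "transpose Qk = Qk" using Qkj JJ unfolding Qk_def by blast
    have Qpsd: "\<forall>d. 0 \<le> inner d (Qk *v d)"
    proof
      fix d :: "real^'n"
      have "0 \<le> \<mu>min * norm d^2" using par by simp
      then show "0 \<le> inner d (Qk *v d)" using Qlow[OF JJ, of d] unfolding Qk_def by linarith
    qed
    have Lnn: "\<forall>i. 0 \<le> Lk $ i" using Lbd unfolding Lk_def J_def by blast
    have U: "(x k, Lk, V k, \<xi> k, Qk) \<in> Uset" unfolding Uset_def using Lnn Qsym Qpsd by simp
    have xbS: "xbk \<in> S" using xbar JJ unfolding xbk_def S_def Lk_def by blast
    have xbmin: "\<forall>z\<in>S. Fmodel g0 \<phi> (x k) (\<xi> k) Qk xbk \<le> Fmodel g0 \<phi> (x k) (\<xi> k) Qk z"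
      using xbar JJ unfolding xbk_def S_def Lk_def Qk_def by blast
    have cS: "convex S" unfolding S_def by (rule Gset_convex[OF Lnn])
    obtain w where w1: "\<forall>z. Fmodel g0 \<phi> (x k) (\<xi> k) Qk xbk + inner w (z - xbk) \<le> Fmodel g0 \<phi> (x k) (\<xi> k) Qk z"
      and w2: "\<forall>z\<in>S. 0 \<le> inner w (z - xbk)"
      using convex_opt_sep[OF Fmodel_convex[OF Qsym Qpsd A1_phi] cS xbS xbmin] by blast
    define a where "a = xbk - x k"
    define w\<phi> where "w\<phi> = w - \<xi> k - Qk *v a"
    define C where "C = (\<mu>bar + M) / 2"
    have C0: "C \<ge> 0" unfolding C_def using mubar0 par by simp
    have sg: "\<phi> xbk + inner w\<phi> (z - xbk) - C * norm (z - xbk)^2 \<le> \<phi> z" for z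
    proof -
      define e where "e = z - xbk"
      define Fz where "Fz = Fmodel g0 \<phi> (x k) (\<xi> k) Qk z"
      define Fb where "Fb = Fmodel g0 \<phi> (x k) (\<xi> k) Qk xbk"
      define I1 where "I1 = inner (\<xi> k + Qk *v a) e"
      define qe where "qe = inner e (Qk *v e)"
      define N where "N = norm e ^ 2"
      define Iw where "Iw = inner w e"
      define Iwp where "Iwp = inner w\<phi> e"
      have d: "Fz - Fb = I1 + qe / 2 + \<phi> z - \<phi> xbk"
        unfolding Fz_def Fb_def I1_def qe_def e_def a_def by (rule Fmodel_diff[OF Qsym])
      have h1: "Fb + Iw \<le> Fz" using w1 unfolding Fb_def Fz_def Iw_def e_def by blast
      have h2: "Iwp = Iw - I1" unfolding Iwp_def Iw_def I1_def w\<phi>_def by (simp add: inner_diff_left inner_add_left)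
      have h3: "qe \<le> (\<mu> k J + M) * N" using Qkj JJ unfolding qe_def N_def Qk_def by blast
      have h4: "(\<mu> k J + M) * N \<le> (\<mu>bar + M) * N" using mubd[of k] unfolding N_def J_def by (intro mult_right_mono) auto
      have h5: "C * N = (\<mu>bar + M) * N / 2" unfolding C_def by simp
      have "\<phi> xbk + Iwp - C * N \<le> \<phi> z" using d h1 h2 h3 h4 h5 by linarith
      then show ?thesis unfolding Iwp_def N_def e_def .
    qed
    have wreg: "w\<phi> \<in> limiting_subdiff \<phi> xbk" by (rule regular_limiting, rule quad_err_regular) (use sg C0 in auto)
    have xbn: "norm xbk \<le> R + Dy" using xbnorm JJ unfolding xbk_def by blast
    have wpb: "norm w\<phi> \<le> 2 * Mp2 + C" by (rule subgrad_bound[OF _ Mp2 xbn C0]) (use sg in auto)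
    define yv where "yv = - w"
    have ync: "yv \<in> limiting_normal_cone S xbk"
      by (rule normal_cone_conv[OF xbS]) (use w2 in \<open>auto simp: yv_def\<close>)
    have eq: "\<xi> k + Qk *v a + w\<phi> + yv = 0" unfolding w\<phi>_def yv_def by simp
    have wdec: "w = \<xi> k + Qk *v a + w\<phi>" unfolding w\<phi>_def by simp
    have nQa: "norm (Qk *v a) \<le> real CARD('n) * real CARD('n) * (\<mu>bar + M) * Dy"
    proof -
      have "norm (Qk *v a) \<le> real CARD('n) * real CARD('n) * (\<mu>bar + M) * norm a"
        by (rule mat_vec_bound) (use Qentry in \<open>simp add: Qk_def J_def\<close>)
      also have "\<dots> \<le> real CARD('n) * real CARD('n) * (\<mu>bar + M) * Dy"
        using xbdist[OF JJ] mubar0 par unfolding a_def xbk_def by (intro mult_left_mono) auto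
      finally show ?thesis .
    qed
    have "norm yv \<le> norm (\<xi> k) + norm (Qk *v a) + norm w\<phi>"
      unfolding yv_def norm_minus_cancel wdec by (meson norm_triangle_le norm_triangle_ineq add_mono order_refl)
    then have nyv: "norm yv \<le> Yb" using xiB[of k] nQa wpb unfolding Yb_def C_def by linarith
    show ?thesis
      using U xbS wreg ync eq nyv SS unfolding Qk_def Lk_def xbk_def J_def a_def by auto
  qed
  define P where "P = (\<lambda>k. ((x k, L k (jk k), V k, \<xi> k, Q k (jk k)), xb k (jk k)))"
  define Dgs where "Dgs = (\<Sum>i\<in>UNIV. \<bar>Dg i\<bar>)"
  have bP: "bounded (range P)"
  proof -
    define PB where "PB = R + real CARD('m) * Lbar + real CARD('n) * (real CARD('m) * Dgs) + D0
        + real CARD('n) * (real CARD('n) * (\<mu>bar + M)) + (R + Dy)"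
    have "norm (P k) \<le> PB" for k
    proof -
      have nL: "norm (L k (jk k)) \<le> real CARD('m) * Lbar"
      proof -
        have "norm (L k (jk k)) \<le> (\<Sum>i\<in>UNIV. \<bar>L k (jk k) $ i\<bar>)" by (rule norm_le_l1_cart)
        also have "\<dots> \<le> (\<Sum>i\<in>(UNIV::'m set). Lbar)" using Lbd by (intro sum_mono) (simp add: abs_le_iff)
        finally show ?thesis by simp
      qed
      have nV: "norm (V k) \<le> real CARD('n) * (real CARD('m) * Dgs)"
      proof (rule mat_norm_bound, intro allI)
        fix a b
        have "\<bar>V k $ a $ b\<bar> = \<bar>column b (V k) $ a\<bar>" by (simp add: column_def)
        also have "\<dots> \<le> norm (column b (V k))" by (rule component_le_norm_cart)
        also have "\<dots> \<le> Dg b" by (rule colB)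
        also have "\<dots> \<le> Dgs" unfolding Dgs_def using member_le_sum[of b UNIV "\<lambda>i. \<bar>Dg i\<bar>"] by simp
        finally show "\<bar>V k $ a $ b\<bar> \<le> Dgs" .
      qed
      have nQ: "norm (Q k (jk k)) \<le> real CARD('n) * (real CARD('n) * (\<mu>bar + M))"
        by (rule mat_norm_bound) (use Qentry in blast)
      have nxb: "norm (xb k (jk k)) \<le> R + Dy" using xbnorm by blast
      have "norm (P k) \<le> norm (x k) + norm (L k (jk k)) + norm (V k) + norm (\<xi> k) + norm (Q k (jk k)) + norm (xb k (jk k))"
        unfolding P_def by (rule norm6)
      then show ?thesis unfolding PB_def using R[of k] nL nV xiB[of k] nQ nxb by linarith
    qed
    then show ?thesis unfolding bounded_iff by blast
  qed
  show ?thesis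
  proof (rule ccontr)
    assume neg: "\<not> ?thesis"
    define Mk where "Mk k = Mset g \<phi> (x k, L k (jk k), V k, \<xi> k, Q k (jk k)) (xb k (jk k))" for k
    have neg': "\<forall>khat. \<forall>\<beta>>0. \<exists>k\<ge>khat. \<forall>l\<in>Mk k. \<not> norm l \<le> \<beta>" using neg unfolding Mk_def by blast
    have bad: "\<exists>k\<ge>N. \<forall>l\<in>Mk k. real n + 1 < norm l" for N n
    proof -
      have "real n + 1 > 0" by simp
      then obtain k where "k \<ge> N" "\<forall>l\<in>Mk k. \<not> norm l \<le> real n + 1" using neg' by blast
      then show ?thesis by (auto simp: not_le)
    qed
    then obtain KK where KK: "\<And>N n. KK N n \<ge> N \<and> (\<forall>l\<in>Mk (KK N n). real n + 1 < norm l)" by metis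
    define r where "r = rec_nat (KK 0 0) (\<lambda>n rn. KK (Suc rn) (Suc n))"
    have r0: "r 0 = KK 0 0" unfolding r_def by simp
    have rS: "r (Suc n) = KK (Suc (r n)) (Suc n)" for n unfolding r_def by simp
    have rbad: "\<forall>l\<in>Mk (r n). real n + 1 < norm l" for n
    proof (cases n)
      case 0 then show ?thesis using KK[of 0 0] r0 by simp
    next
      case (Suc m) then show ?thesis using KK[of "Suc (r m)" "Suc m"] rS[of m] by simp
    qed
    have rmono: "strict_mono r" unfolding strict_mono_Suc_iff
    proof
      fix n show "r n < r (Suc n)" using KK[of "Suc (r n)" "Suc n"] rS[of n] by simp
    qed
    have bPr: "bounded (range (P \<circ> r))" using bP by (rule bounded_subset) auto
    obtain l0 r2 where r2: "strict_mono r2" "((P \<circ> r) \<circ> r2) \<longlonglongrightarrow> l0"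
      using bounded_imp_convergent_subsequence[OF bPr] by blast
    have "l0 \<in> cluster_points P" unfolding cluster_points_def
      using r2 rmono by (auto intro!: exI[of _ "r \<circ> r2"] strict_mono_o simp: o_assoc)
    then have "partial_BMP g (fst l0) (snd l0)" using A4 unfolding P_def by blast
    then obtain \<kappa> \<delta> where kd: "\<kappa> > 0" "\<delta> > 0"
      and bmp: "\<forall>u z. u \<in> Uset \<and> dist (u, z) (fst l0, snd l0) < \<delta> \<and> z \<in> Sset g u \<longrightarrow>
        (\<forall>yy\<in>limiting_normal_cone (Sset g u) z. \<exists>lam\<in>Lambda_set g u z yy. norm lam \<le> \<kappa> * norm yy)"
      unfolding partial_BMP_def by blast
    obtain N1 where N1: "\<forall>i\<ge>N1. dist (((P \<circ> r) \<circ> r2) i) l0 < \<delta>"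
      using r2(2) kd(2) unfolding lim_sequentially by blast
    define i where "i = max N1 (nat \<lceil>\<kappa> * Yb\<rceil>)"
    define k where "k = r (r2 i)"
    have close: "dist (P k) l0 < \<delta>" using N1 unfolding i_def k_def by simp
    have ri: "r2 i \<ge> i" using seq_suble[OF r2(1)] by simp
    have "\<kappa> * Yb \<le> real (nat \<lceil>\<kappa> * Yb\<rceil>)" by (rule real_nat_ceiling_ge)
    also have "\<dots> \<le> real i" unfolding i_def by simp
    also have "\<dots> \<le> real (r2 i)" using ri by simp
    finally have kYb: "\<kappa> * Yb \<le> real (r2 i)" .
    obtain w\<phi> yv where kk: "(x k, L k (jk k), V k, \<xi> k, Q k (jk k)) \<in> Uset"
      "xb k (jk k) \<in> Sset g (x k, L k (jk k), V k, \<xi> k, Q k (jk k))"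
      "w\<phi> \<in> limiting_subdiff \<phi> (xb k (jk k))"
      "yv \<in> limiting_normal_cone (Sset g (x k, L k (jk k), V k, \<xi> k, Q k (jk k))) (xb k (jk k))"
      "\<xi> k + Q k (jk k) *v (xb k (jk k) - x k) + w\<phi> + yv = 0" "norm yv \<le> Yb"
      using key[of k] by blast
    have "dist ((x k, L k (jk k), V k, \<xi> k, Q k (jk k)), xb k (jk k)) (fst l0, snd l0) < \<delta>"
      using close unfolding P_def by simp
    then obtain lam where lam: "lam \<in> Lambda_set g (x k, L k (jk k), V k, \<xi> k, Q k (jk k)) (xb k (jk k)) yv"
      "norm lam \<le> \<kappa> * norm yv"
      using bmp kk(1,2,4) by blast
    have lamN: "lam \<in> limiting_normal_cone nonpos_orthant (Gfun g (xb k (jk k)) (x k) (V k) (L k (jk k)))"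
      and lamE: "V k *v lam + (inner (L k (jk k)) lam) *\<^sub>R (xb k (jk k) - x k) = yv"
      using lam(1) unfolding Lambda_set_def by auto
    have "\<xi> k + Q k (jk k) *v (xb k (jk k) - x k) + w\<phi> + V k *v lam + (inner (L k (jk k)) lam) *\<^sub>R (xb k (jk k) - x k) = 0"
      using kk(5) lamE by (simp add: add.assoc)
    then have "lam \<in> Mk k" unfolding Mk_def Mset_def using lamN kk(3) by auto
    then have "real (r2 i) + 1 < norm lam" using rbad[of "r2 i"] unfolding k_def by blast
    moreover have "norm lam \<le> \<kappa> * Yb" using lam(2) kk(6) kd(1) by (meson mult_left_mono less_imp_le order_trans)
    ultimately show False using kYb by linarith
  qed
qed

end
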